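(* Let $\mathcal{T}$ be a triangulation of genus $g$ with root-face $(v_0,v_1,v_2)$, and run the procedure ComputeSchnyderAnyGenus on $\mathcal{T}$. At any step strictly before termination (i.e., while $C\neq\mathcal{T}$), there exists an update-candidate incident to the boundary face of $C$ containing the edge $\{v_0,v_1\}$ (that is, a free boundary corner on that boundary face, or a split or merge edge having a brin exterior to a boundary corner on that boundary face). Consequently the procedure ComputeSchnyderAnyGenus terminates.
   Context: $\mathcal{T}$ is a graph without loops or multiple edges cellularly embedded in the closed orientable surface of genus $g$, all faces of degree 3, with a marked root-face $(v_0,v_1,v_2)$. Each edge consists of two brins (half-edges), one at each endpoint. A subcomplex $C=(V',E',F')$ of $\mathcal{T}$ consists of subsets of vertices, edges, faces such that the edges of each face in $F'$ lie in $E'$ and the endpoints of each edge in $E'$ lie in $V'$; it is connected if $(V',E')$ is connected. $C$ inherits the cyclic order of brins around vertices, hence facial walks; those not bounding a face of $F'$ are boundary walks, and gluing a disk to each boundary walk gives the boundary faces of $C$. For a brin $h$ on a boundary walk with origin $v$, the boundary corner at $h$ is the pair $(h,h')$ where $h'$ is the next brin of $C$ after $h$ in clockwise (cw) order around $v$; the brins of $\mathcal{T}$ strictly between $h$ and $h'$ in cw order are the exterior brins of the corner, their edges the exterior edges, and the faces of $\mathcal{T}$ around $v$ between $h$ and $h'$ are its exterior faces. The complementary dual $D$ of $C$ is the subcomplex of the dual map $\mathcal{T}^*$ formed by the duals of the faces, edges and vertices of $\mathcal{T}$ not in $C$. A chordal edge is an edge of $\mathcal{T}$ not in $C$ whose two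 brins are both exterior brins of boundary corners of $C$. A boundary corner is free if none of its exterior edges is chordal; by convention the boundary corners delimited by the edge $\{v_0,v_1\}$ are never considered free. A chordal edge $e$ is separating if its dual edge $e^*$ is a bridge of $D$. A split edge is a non-separating chordal edge whose two brins are exterior brins of boundary corners on the same boundary face of $C$. A merge edge is a chordal edge whose two brins are exterior brins of boundary corners on two distinct boundary faces of $C$. An update-candidate is a free boundary corner, a split edge, or a merge edge. Operations: conquer$(b)$ adds to $C$ all exterior faces of the free corner $b$, with their edges and vertices. colorient$(b)$: with $v$ the vertex of $b$ and $e,e'$ the two edges of $C$ delimiting $b$ ($e'$ after $e$ in cw order around $v$), orient $e,e'$ out of $v$, give $e$ color 1 and $e'$ color 0, and orient all exterior edges of $b$ toward $v$ with color 2 (edges of the root-face are not colored or oriented). split$(e)$ / merge$(e)$ for a split/merge edge $e$: double $e$ into two parallel edges bounding a face of degree 2 and add these two edges and this face to $C$ ($e$ becomes a special edge). ComputeSchnyderAnyGenus$(\mathcal{T})$: initialize $C$ as the root-face with its edges and vertices; while $C\neq\mathcal{T}$, find any update-candidate $\sigma$; if $\sigma$ is a free corner $b$, perform conquer$(b)$ then colorient$(b)$; if $\sigma$ is a merge edge perform merge; if it is a split edge perform split (no priority among the three types). *)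

theory Defs
  imports Main
begin

(* Combinatorial maps (rotation systems) on a dart ("brin") set.
   alph = edge involution (the two brins of an edge),
   sigm = clockwise rotation of brins around their origin vertex.
   A dart d also names the angle (corner of the map) at its origin between d
   and sigm d; the face lying in that angle is the orbit of d under
   phi = alph o sigm. *)

record 'd cmap =
  darts :: "'d set"
  alph  :: "'d \<Rightarrow> 'd"
  sigm  :: "'d \<Rightarrow> 'd"

definition orb :: "('d \<Rightarrow> 'd) \<Rightarrow> 'd \<Rightarrow> 'd set" where
  "orb f x = {(f ^^ n) x | n. True}"

definition phi :: "'d cmap \<Rightarrow> 'd \<Rightarrow> 'd" where
  "phi M = alph M \<circ> sigm M"

definition vertex :: "'d cmap \<Rightarrow> 'd \<Rightarrow> 'd set" where
  "vertex M d = orb (sigm M) d"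

definition edge :: "'d cmap \<Rightarrow> 'd \<Rightarrow> 'd set" where
  "edge M d = {d, alph M d}"

definition face :: "'d cmap \<Rightarrow> 'd \<Rightarrow> 'd set" where
  "face M d = orb (phi M) d"

definition verts :: "'d cmap \<Rightarrow> 'd set set" where
  "verts M = vertex M ` darts M"

definition edges :: "'d cmap \<Rightarrow> 'd set set" where
  "edges M = edge M ` darts M"

definition faces :: "'d cmap \<Rightarrow> 'd set set" where
  "faces M = face M ` darts M"

definition comb_map :: "'d cmap \<Rightarrow> bool" where
  "comb_map M \<longleftrightarrow> finite (darts M)
     \<and> bij_betw (alph M) (darts M) (darts M)
     \<and> (\<forall>d\<in>darts M. alph M (alph M d) = d \<and> alph M d \<noteq> d)
     \<and> bij_betw (sigm M) (darts M) (darts M)"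

definition map_connected :: "'d cmap \<Rightarrow> bool" where
  "map_connected M \<longleftrightarrow> (\<forall>x\<in>darts M. \<forall>y\<in>darts M.
     (x, y) \<in> ({(d, alph M d) | d. d \<in> darts M} \<union> {(d, sigm M d) | d. d \<in> darts M})\<^sup>*)"

definition simple_map :: "'d cmap \<Rightarrow> bool" where
  "simple_map M \<longleftrightarrow> (\<forall>d\<in>darts M. alph M d \<notin> vertex M d)
     \<and> (\<forall>d\<in>darts M. \<forall>d'\<in>darts M.
          vertex M d = vertex M d' \<and> vertex M (alph M d) = vertex M (alph M d')
          \<longrightarrow> edge M d = edge M d')"

definition has_genus :: "'d cmap \<Rightarrow> nat \<Rightarrow> bool" where
  "has_genus M g \<longleftrightarrow>
     int (card (verts M)) - int (card (edges M)) + int (card (faces M)) = 2 - 2 * int g"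

definition triangulation :: "'d cmap \<Rightarrow> nat \<Rightarrow> bool" where
  "triangulation M g \<longleftrightarrow> comb_map M \<and> map_connected M \<and> simple_map M
     \<and> has_genus M g \<and> (\<forall>d\<in>darts M. card (face M d) = 3)"

type_synonym 'd cplx = "'d set set \<times> 'd set set \<times> 'd set set"

definition cV :: "'d cplx \<Rightarrow> 'd set set" where "cV C = fst C"
definition cE :: "'d cplx \<Rightarrow> 'd set set" where "cE C = fst (snd C)"
definition cF :: "'d cplx \<Rightarrow> 'd set set" where "cF C = snd (snd C)"

definition full_cplx :: "'d cmap \<Rightarrow> 'd cplx" where
  "full_cplx M = (verts M, edges M, faces M)"

definition nxt :: "'d cmap \<Rightarrow> 'd cplx \<Rightarrow> 'd \<Rightarrow> nat" where
  "nxt M C h = (LEAST k. 0 < k \<and> edge M ((sigm M ^^ k) h) \<in> cE C)"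

(* inherited rotation of C *)
definition sigC :: "'d cmap \<Rightarrow> 'd cplx \<Rightarrow> 'd \<Rightarrow> 'd" where
  "sigC M C h = (sigm M ^^ nxt M C h) h"

definition walk :: "'d cmap \<Rightarrow> 'd cplx \<Rightarrow> 'd \<Rightarrow> 'd set" where
  "walk M C h = orb (alph M \<circ> sigC M C) h"

(* h is a brin on a boundary walk; the boundary corner at h is (h, sigC M C h);
   the boundary face it lies on is identified with walk M C h *)
definition bcorner :: "'d cmap \<Rightarrow> 'd cplx \<Rightarrow> 'd \<Rightarrow> bool" where
  "bcorner M C h \<longleftrightarrow> h \<in> darts M \<and> edge M h \<in> cE C \<and> walk M C h \<notin> cF C"

definition ext_brins :: "'d cmap \<Rightarrow> 'd cplx \<Rightarrow> 'd \<Rightarrow> 'd set" where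
  "ext_brins M C h = {(sigm M ^^ k) h | k. 0 < k \<and> k < nxt M C h}"

definition ext_faces :: "'d cmap \<Rightarrow> 'd cplx \<Rightarrow> 'd \<Rightarrow> 'd set set" where
  "ext_faces M C h = {face M ((sigm M ^^ k) h) | k. k < nxt M C h}"

definition is_ext :: "'d cmap \<Rightarrow> 'd cplx \<Rightarrow> 'd \<Rightarrow> 'd \<Rightarrow> bool" where
  "is_ext M C d h \<longleftrightarrow> bcorner M C h \<and> d \<in> ext_brins M C h"

definition chordal :: "'d cmap \<Rightarrow> 'd cplx \<Rightarrow> 'd set \<Rightarrow> bool" where
  "chordal M C e \<longleftrightarrow> e \<in> edges M \<and> e \<notin> cE C \<and> (\<forall>d\<in>e. \<exists>h. is_ext M C d h)"

(* r is the root brin: root face = face M r, edge {v0,v1} = edge M r *)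
definition free_corner :: "'d cmap \<Rightarrow> 'd \<Rightarrow> 'd cplx \<Rightarrow> 'd \<Rightarrow> bool" where
  "free_corner M r C h \<longleftrightarrow> bcorner M C h
     \<and> (\<forall>d\<in>ext_brins M C h. \<not> chordal M C (edge M d))
     \<and> h \<notin> edge M r \<and> sigC M C h \<notin> edge M r"

(* dual edge e* is a bridge of the complementary dual D *)
definition separating :: "'d cmap \<Rightarrow> 'd cplx \<Rightarrow> 'd set \<Rightarrow> bool" where
  "separating M C e \<longleftrightarrow> chordal M C e \<and>
     (\<exists>d\<in>e. (face M d, face M (alph M d)) \<notin>
        {(face M x, face M (alph M x)) | x.
            x \<in> darts M \<and> edge M x \<notin> cE C \<and> edge M x \<noteq> e}\<^sup>*)"

definition split_edge :: "'d cmap \<Rightarrow> 'd cplx \<Rightarrow> 'd set \<Rightarrow> bool" where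
  "split_edge M C e \<longleftrightarrow> chordal M C e \<and> \<not> separating M C e \<and>
     (\<exists>d h d' h'. d \<in> e \<and> d' \<in> e \<and> d \<noteq> d' \<and> is_ext M C d h \<and> is_ext M C d' h'
        \<and> walk M C h = walk M C h')"

definition merge_edge :: "'d cmap \<Rightarrow> 'd cplx \<Rightarrow> 'd set \<Rightarrow> bool" where
  "merge_edge M C e \<longleftrightarrow> chordal M C e \<and>
     (\<exists>d h d' h'. d \<in> e \<and> d' \<in> e \<and> d \<noteq> d' \<and> is_ext M C d h \<and> is_ext M C d' h'
        \<and> walk M C h \<noteq> walk M C h')"

definition conquer :: "'d cmap \<Rightarrow> 'd cplx \<Rightarrow> 'd \<Rightarrow> 'd cplx" where
  "conquer M C h =
     (let Fn = ext_faces M C h;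
          En = {edge M d | d f. f \<in> Fn \<and> d \<in> f};
          Vn = {vertex M x | x. x \<in> \<Union> En}
      in (cV C \<union> Vn, cE C \<union> En, cF C \<union> Fn))"

(* split/merge: doubling e and adding the digon is modelled by adding e to C
   (it becomes a special edge) *)
definition double_edge :: "'d cmap \<Rightarrow> 'd cplx \<Rightarrow> 'd set \<Rightarrow> 'd cplx" where
  "double_edge M C e = (cV C, insert e (cE C), cF C)"

definition init_cplx :: "'d cmap \<Rightarrow> 'd \<Rightarrow> 'd cplx" where
  "init_cplx M r =
     (let Er = edge M ` face M r in ({vertex M x | x. x \<in> \<Union> Er}, Er, {face M r}))"

(* one iteration of ComputeSchnyderAnyGenus (colorient does not affect C) *)
definition alg_step :: "'d cmap \<Rightarrow> 'd \<Rightarrow> 'd cplx \<Rightarrow> 'd cplx \<Rightarrow> bool" where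
  "alg_step M r C C' \<longleftrightarrow> C \<noteq> full_cplx M \<and>
     ((\<exists>h. free_corner M r C h \<and> C' = conquer M C h)
      \<or> (\<exists>e. split_edge M C e \<and> C' = double_edge M C e)
      \<or> (\<exists>e. merge_edge M C e \<and> C' = double_edge M C e))"

definition root_candidate :: "'d cmap \<Rightarrow> 'd \<Rightarrow> 'd cplx \<Rightarrow> bool" where
  "root_candidate M r C \<longleftrightarrow> (\<exists>h0\<in>edge M r. bcorner M C h0 \<and>
     ((\<exists>h. free_corner M r C h \<and> walk M C h = walk M C h0)
      \<or> (\<exists>e d h. (split_edge M C e \<or> merge_edge M C e) \<and> d \<in> e
            \<and> is_ext M C d h \<and> walk M C h = walk M C h0)))"

end

theory Submission
  imports Defs
begin

lemma fp_add: "(f ^^ (m + n)) x = (f ^^ m) ((f ^^ n) x)"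
  by (simp add: funpow_add)

lemma fp_comm: "(f ^^ m) ((f ^^ n) x) = (f ^^ n) ((f ^^ m) x)"
  by (metis fp_add add.commute)

lemma fp_Suc: "f ((f ^^ n) x) = (f ^^ Suc n) x"
  by simp

definition per :: "('a \<Rightarrow> 'a) \<Rightarrow> 'a \<Rightarrow> nat" where
  "per f x = (LEAST n. 0 < n \<and> (f ^^ n) x = x)"

locale permS =
  fixes f :: "'a \<Rightarrow> 'a" and S :: "'a set"
  assumes fin: "finite S" and maps: "\<And>x. x \<in> S \<Longrightarrow> f x \<in> S" and inj: "inj_on f S"
begin

lemma funpow_in: "x \<in> S \<Longrightarrow> (f ^^ n) x \<in> S"
  by (induction n) (auto intro: maps)

lemma inj_funpow: "inj_on (f ^^ n) S"
proof (induction n)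
  case 0 then show ?case by simp
next
  case (Suc n)
  have "inj_on (f \<circ> (f ^^ n)) S"
    using Suc inj by (auto simp: inj_on_def funpow_in)
  then show ?case by (simp add: comp_def)
qed

lemma funpow_cancel: "x \<in> S \<Longrightarrow> y \<in> S \<Longrightarrow> (f ^^ n) x = (f ^^ n) y \<Longrightarrow> x = y"
  using inj_funpow[of n] by (auto simp: inj_on_def)

lemma exists_period: assumes "x \<in> S" shows "\<exists>n>0. (f ^^ n) x = x"
proof -
  let ?g = "\<lambda>k. (f ^^ k) x"
  have "?g ` {..card S} \<subseteq> S" using funpow_in assms by auto
  hence "card (?g ` {..card S}) \<le> card S" using fin card_mono by blast
  hence "\<not> inj_on ?g {..card S}"
  proof (intro notI)
    assume "card (?g ` {..card S}) \<le> card S" "inj_on ?g {..card S}"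
    moreover have "card (?g ` {..card S}) = Suc (card S)"
      using \<open>inj_on ?g {..card S}\<close> by (simp add: card_image)
    ultimately show False by simp
  qed
  then obtain i j where ij: "i \<le> card S" "j \<le> card S" "i \<noteq> j" "?g i = ?g j"
    by (auto simp: inj_on_def)
  { fix i j assume a: "i < j" "?g i = ?g j"
    have "(f ^^ i) ((f ^^ (j - i)) x) = (f ^^ i) x"
      using a fp_add[of i "j - i" f x] by simp
    hence "(f ^^ (j - i)) x = x" using funpow_cancel funpow_in assms by blast
    hence "\<exists>n>0. (f ^^ n) x = x" using a by (intro exI[of _ "j - i"]) auto }
  note gen = this
  show ?thesis
  proof (cases "i < j")
    case True then show ?thesis using gen ij by blast
  next
    case False hence "j < i" using ij by simp
    then show ?thesis using gen[of j i] ij by simp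
  qed
qed

lemma per_prop: "x \<in> S \<Longrightarrow> 0 < per f x \<and> (f ^^ per f x) x = x"
  unfolding per_def by (rule LeastI_ex) (rule exists_period)

lemma per_pos: "x \<in> S \<Longrightarrow> 0 < per f x"
  using per_prop by blast

lemma per_fix: "x \<in> S \<Longrightarrow> (f ^^ per f x) x = x"
  using per_prop by blast

lemma per_min: "0 < n \<Longrightarrow> n < per f x \<Longrightarrow> (f ^^ n) x \<noteq> x"
  unfolding per_def using not_less_Least by blast

lemma funpow_mult_per: "x \<in> S \<Longrightarrow> (f ^^ (k * per f x)) x = x"
proof (induction k)
  case 0 then show ?case by simp
next
  case (Suc k)
  have "(f ^^ (Suc k * per f x)) x = (f ^^ (k * per f x)) ((f ^^ per f x) x)"
    using fp_add[of "k * per f x" "per f x" f x] by (simp add: add.commute)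
  then show ?case using Suc per_fix by simp
qed

lemma funpow_mod: "x \<in> S \<Longrightarrow> (f ^^ n) x = (f ^^ (n mod per f x)) x"
proof -
  assume x: "x \<in> S"
  have "n = n mod per f x + (n div per f x) * per f x" using mod_div_mult_eq[of n "per f x"] by simp
  hence "(f ^^ n) x = (f ^^ (n mod per f x)) ((f ^^ ((n div per f x) * per f x)) x)"
    by (metis fp_add)
  then show ?thesis using funpow_mult_per x by simp
qed

lemma per_distinct:
  assumes x: "x \<in> S" and ij: "i < per f x" "j < per f x" "(f ^^ i) x = (f ^^ j) x"
  shows "i = j"
proof (rule ccontr)
  assume "i \<noteq> j"
  { fix i j assume a: "i < j" "j < per f x" "(f ^^ i) x = (f ^^ j) x"
    have "(f ^^ i) ((f ^^ (j - i)) x) = (f ^^ i) x"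
      using a fp_add[of i "j - i" f x] by simp
    hence "(f ^^ (j - i)) x = x" using funpow_cancel funpow_in x by blast
    hence False using per_min[of "j - i" x] a by auto }
  note gen = this
  show False
  proof (cases "i < j")
    case True then show ?thesis using gen ij by blast
  next
    case False hence "j < i" using \<open>i \<noteq> j\<close> by simp
    then show ?thesis using gen[of j i] ij by simp
  qed
qed

lemma orb_eq: assumes x: "x \<in> S" shows "orb f x = (\<lambda>k. (f ^^ k) x) ` {..<per f x}"
proof
  show "orb f x \<subseteq> (\<lambda>k. (f ^^ k) x) ` {..<per f x}"
  proof
    fix y assume "y \<in> orb f x"
    then obtain n where "y = (f ^^ n) x" unfolding orb_def by auto
    hence "y = (f ^^ (n mod per f x)) x" using funpow_mod[OF x, of n] by (rule trans)
    moreover have "n mod per f x < per f x" using per_pos x by simp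
    ultimately show "y \<in> (\<lambda>k. (f ^^ k) x) ` {..<per f x}" by blast
  qed
  show "(\<lambda>k. (f ^^ k) x) ` {..<per f x} \<subseteq> orb f x" unfolding orb_def by blast
qed

lemma in_orb: "x \<in> orb f x"
proof -
  have "x = (f ^^ 0) x" by simp
  thus ?thesis unfolding orb_def by blast
qed

lemma orb_step: assumes "y \<in> orb f x" shows "f y \<in> orb f x"
proof -
  obtain n where "y = (f ^^ n) x" using assms unfolding orb_def by auto
  hence "f y = (f ^^ Suc n) x" by simp
  thus ?thesis unfolding orb_def by blast
qed

lemma orb_funpow: "(f ^^ n) x \<in> orb f x"
  unfolding orb_def by blast

lemma orb_sub: "x \<in> S \<Longrightarrow> orb f x \<subseteq> S"
  unfolding orb_def using funpow_in by blast

lemma orb_sym: assumes x: "x \<in> S" and y: "y \<in> orb f x" shows "orb f y = orb f x"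
proof -
  obtain n where n: "y = (f ^^ n) x" using y unfolding orb_def by auto
  have sub1: "orb f y \<subseteq> orb f x"
    unfolding orb_def n by (auto simp: fp_add[symmetric])
  have "x \<in> orb f y"
  proof -
    let ?P = "per f x"
    have "n mod ?P < ?P" using per_pos x by simp
    have "(f ^^ (?P - n mod ?P)) y = (f ^^ (?P - n mod ?P)) ((f ^^ (n mod ?P)) x)"
      using n funpow_mod[OF x, of n] by (simp only:)
    also have "\<dots> = (f ^^ ?P) x" using \<open>n mod ?P < ?P\<close>
      by (simp add: fp_add[symmetric])
    also have "\<dots> = x" using per_fix x by simp
    finally have "x = (f ^^ (?P - n mod ?P)) y" by simp
    thus ?thesis unfolding orb_def by blast
  qed
  then obtain m where m: "x = (f ^^ m) y" unfolding orb_def by auto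
  have "orb f x \<subseteq> orb f y"
    unfolding orb_def m by (auto simp: fp_add[symmetric])
  thus ?thesis using sub1 by blast
qed

lemma orb_same: "x \<in> S \<Longrightarrow> y \<in> orb f x \<Longrightarrow> x \<in> orb f y"
  using orb_sym in_orb by metis

lemma card_orb: "x \<in> S \<Longrightarrow> card (orb f x) = per f x"
proof -
  assume x: "x \<in> S"
  have "inj_on (\<lambda>k. (f ^^ k) x) {..<per f x}"
    using per_distinct x by (auto simp: inj_on_def)
  thus ?thesis using orb_eq[OF x] by (simp add: card_image)
qed

end

lemma orb_agree:
  assumes "\<And>y. y \<in> orb g x \<Longrightarrow> f y = g y"
  shows "(f ^^ n) x = (g ^^ n) x"
proof (induction n)
  case 0 then show ?case by simp
next
  case (Suc n)
  have "(g ^^ n) x \<in> orb g x" unfolding orb_def by auto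
  then show ?case using Suc assms by simp
qed

lemma orb_agree_eq:
  assumes "\<And>y. y \<in> orb g x \<Longrightarrow> f y = g y"
  shows "orb f x = orb g x"
  unfolding orb_def using orb_agree[OF assms] by auto


locale tri =
  fixes M :: "'d cmap" and g :: nat and r :: 'd
  assumes T: "triangulation M g" and r_in: "r \<in> darts M"
begin

abbreviation "D \<equiv> darts M"
abbreviation "a \<equiv> alph M"
abbreviation "s \<equiv> sigm M"
abbreviation "p \<equiv> phi M"

lemma CM: "comb_map M" using T unfolding triangulation_def by blast
lemma fin: "finite D" using CM unfolding comb_map_def by blast
lemma a_in: "x \<in> D \<Longrightarrow> a x \<in> D" using CM unfolding comb_map_def bij_betw_def by blast
lemma s_in: "x \<in> D \<Longrightarrow> s x \<in> D" using CM unfolding comb_map_def bij_betw_def by blast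
lemma aa[simp]: "x \<in> D \<Longrightarrow> a (a x) = x" using CM unfolding comb_map_def by blast
lemma a_neq: "x \<in> D \<Longrightarrow> a x \<noteq> x" using CM unfolding comb_map_def by blast
lemma inj_a: "inj_on a D" using CM unfolding comb_map_def bij_betw_def by blast
lemma inj_s: "inj_on s D" using CM unfolding comb_map_def bij_betw_def by blast
lemma p_eq: "p x = a (s x)" unfolding phi_def by simp
lemma p_in: "x \<in> D \<Longrightarrow> p x \<in> D" using a_in s_in p_eq by simp
lemma inj_p: "inj_on p D"
  unfolding inj_on_def p_eq using inj_a inj_s s_in by (auto simp: inj_on_def)
lemma a_inj: "x \<in> D \<Longrightarrow> y \<in> D \<Longrightarrow> a x = a y \<Longrightarrow> x = y" using inj_a by (auto simp: inj_on_def)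
lemma s_inj: "x \<in> D \<Longrightarrow> y \<in> D \<Longrightarrow> s x = s y \<Longrightarrow> x = y" using inj_s by (auto simp: inj_on_def)
lemma p_inj: "x \<in> D \<Longrightarrow> y \<in> D \<Longrightarrow> p x = p y \<Longrightarrow> x = y" using inj_p by (auto simp: inj_on_def)

sublocale S: permS s D using fin s_in inj_s by unfold_locales auto
sublocale P: permS p D using fin p_in inj_p by unfold_locales auto

lemma sn_in: "x \<in> D \<Longrightarrow> (s ^^ n) x \<in> D" using S.funpow_in .
lemma pn_in: "x \<in> D \<Longrightarrow> (p ^^ n) x \<in> D" using P.funpow_in .

lemma face3: "x \<in> D \<Longrightarrow> card (face M x) = 3"
  using T unfolding triangulation_def by blast

lemma per_p: "x \<in> D \<Longrightarrow> per p x = 3"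
  using face3 P.card_orb unfolding face_def by simp

lemma ppp: "x \<in> D \<Longrightarrow> p (p (p x)) = x"
  using P.per_fix[of x] per_p by (simp add: numeral_3_eq_3)

lemma face_eq: assumes x: "x \<in> D" shows "face M x = {x, p x, p (p x)}"
proof -
  have "face M x = (\<lambda>k. (p ^^ k) x) ` {..<3}" unfolding face_def using P.orb_eq x per_p by simp
  also have "{..<3::nat} = {0,1,2}" by auto
  finally show ?thesis by (simp add: numeral_2_eq_2)
qed

lemma face_distinct: assumes x: "x \<in> D" shows "p x \<noteq> x" "p (p x) \<noteq> x" "p (p x) \<noteq> p x"
proof -
  have c: "card {x, p x, p (p x)} = 3" using face_eq face3 x by simp
  show "p x \<noteq> x" using c by (auto simp: card_insert_if split: if_splits)
  show "p (p x) \<noteq> x" using c by (auto simp: card_insert_if split: if_splits)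
  show "p (p x) \<noteq> p x" using c by (auto simp: card_insert_if split: if_splits)
qed

lemma in_face: "x \<in> face M x" unfolding face_def using P.in_orb .
lemma face_sym: "x \<in> D \<Longrightarrow> y \<in> face M x \<Longrightarrow> face M y = face M x"
  unfolding face_def using P.orb_sym by blast
lemma face_p: "x \<in> D \<Longrightarrow> face M (p x) = face M x"
  using face_sym face_eq by simp
lemma face_as: "x \<in> D \<Longrightarrow> face M (a (s x)) = face M x"
  using face_p p_eq by simp
lemma face_sub: "x \<in> D \<Longrightarrow> face M x \<subseteq> D"
  using face_eq p_in by auto
lemma face_iff: "x \<in> D \<Longrightarrow> y \<in> D \<Longrightarrow> face M x = face M y \<longleftrightarrow> y \<in> face M x"
  using face_sym in_face by metis

lemma in_vertex: "x \<in> vertex M x" unfolding vertex_def using S.in_orb .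
lemma vertex_sym: "x \<in> D \<Longrightarrow> y \<in> vertex M x \<Longrightarrow> vertex M y = vertex M x"
  unfolding vertex_def using S.orb_sym by blast
lemma vertex_s: "x \<in> D \<Longrightarrow> vertex M (s x) = vertex M x"
  using vertex_sym S.orb_step in_vertex unfolding vertex_def by blast
lemma vertex_sn: "x \<in> D \<Longrightarrow> vertex M ((s ^^ n) x) = vertex M x"
  using vertex_sym S.orb_funpow unfolding vertex_def by blast
lemma sn_in_vertex: "(s ^^ n) x \<in> vertex M x"
  using S.orb_funpow unfolding vertex_def .
lemma vertex_iff: "x \<in> D \<Longrightarrow> y \<in> D \<Longrightarrow> vertex M x = vertex M y \<longleftrightarrow> y \<in> vertex M x"
  using vertex_sym in_vertex by metis
lemma vertex_sub: "x \<in> D \<Longrightarrow> vertex M x \<subseteq> D"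
  unfolding vertex_def using S.orb_sub by blast

lemma SM: "simple_map M" using T unfolding triangulation_def by blast
lemma noloop: "x \<in> D \<Longrightarrow> a x \<notin> vertex M x" using SM unfolding simple_map_def by blast
lemma noloop': "x \<in> D \<Longrightarrow> vertex M (a x) \<noteq> vertex M x"
  using noloop in_vertex by metis
lemma nomulti: "d \<in> D \<Longrightarrow> d' \<in> D \<Longrightarrow> vertex M d = vertex M d' \<Longrightarrow> vertex M (a d) = vertex M (a d')
   \<Longrightarrow> edge M d = edge M d'"
  using SM unfolding simple_map_def by blast

lemma edge_a: "x \<in> D \<Longrightarrow> edge M (a x) = edge M x" unfolding edge_def by auto
lemma edge_eqD: "edge M x = edge M y \<Longrightarrow> x = y \<or> x = a y" unfolding edge_def by auto
lemma in_edge: "x \<in> edge M x" unfolding edge_def by auto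

lemma nomulti': assumes "d \<in> D" "d' \<in> D" "vertex M d = vertex M d'" "vertex M (a d) = vertex M (a d')"
  shows "d = d'"
proof -
  have "edge M d = edge M d'" using nomulti assms by blast
  hence "d = d' \<or> d = a d'" using edge_eqD by blast
  moreover have "d \<noteq> a d'"
  proof
    assume "d = a d'"
    hence "vertex M (a d') = vertex M d'" using assms by simp
    thus False using noloop' assms by blast
  qed
  ultimately show ?thesis by blast
qed

lemma s_neq: assumes y: "y \<in> D" shows "s y \<noteq> y"
proof
  assume sy: "s y = y"
  let ?z = "p (a y)"
  have ay: "a y \<in> D" using a_in y by simp
  have py: "p y = a y" using sy p_eq by simp
  have "p ?z = y" using ppp[OF y] py by simp
  hence "a (s ?z) = y" using p_eq by simp
  hence "s ?z = a y" using aa y by (metis a_in p_in ay s_in)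
  hence "vertex M (a y) = vertex M ?z" using vertex_s p_in ay by metis
  moreover have "?z = a (s (a y))" using p_eq by simp
  moreover have "vertex M (s (a y)) = vertex M (a y)" using vertex_s ay by simp
  ultimately have "vertex M (a (s (a y))) = vertex M (s (a y))" by simp
  thus False using noloop' s_in ay by metis
qed

lemma vertex_pp: "x \<in> D \<Longrightarrow> vertex M (p (p x)) = vertex M (a x)"
proof -
  assume x: "x \<in> D"
  have "a (s (p (p x))) = x" using ppp[OF x] p_eq by simp
  hence "s (p (p x)) = a x" by (metis aa a_in s_in p_in x)
  thus ?thesis using vertex_s p_in x by metis
qed

lemma vertex_p: "x \<in> D \<Longrightarrow> vertex M (p x) = vertex M (a (s x))"
  using p_eq by simp

lemma face_vertices: assumes x: "x \<in> D"
  shows "vertex M (p x) \<noteq> vertex M x" "vertex M (p (p x)) \<noteq> vertex M x"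
        "vertex M (p (p x)) \<noteq> vertex M (p x)"
proof -
  show "vertex M (p x) \<noteq> vertex M x"
    using noloop'[OF s_in[OF x]] vertex_s[OF x] p_eq by simp
  show "vertex M (p (p x)) \<noteq> vertex M x"
    using vertex_pp[OF x] noloop'[OF x] by simp
  have px: "p x \<in> D" using p_in x by simp
  show "vertex M (p (p x)) \<noteq> vertex M (p x)"
    using noloop'[OF s_in[OF px]] vertex_s[OF px] p_eq by simp
qed

lemma face_one_per_vertex: assumes x: "x \<in> D" and y: "y \<in> face M x" "y' \<in> face M x"
  and v: "vertex M y = vertex M y'" shows "y = y'"
  using y v face_vertices[OF x] unfolding face_eq[OF x] by auto

lemma a_notin_face: assumes x: "x \<in> D" shows "a x \<notin> face M x"
proof
  assume "a x \<in> face M x"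
  hence "a x = x \<or> a x = p x \<or> a x = p (p x)" using face_eq x by simp
  moreover have "a x \<noteq> x" using a_neq x .
  moreover have "a x \<noteq> p x"
  proof
    assume "a x = p x" hence "a x = a (s x)" using p_eq by simp
    hence "x = s x" using a_inj x s_in by blast
    thus False using s_neq x by metis
  qed
  moreover have "a x \<noteq> p (p x)"
  proof
    assume h: "a x = p (p x)"
    have "p (a x) = x" using h ppp x by simp
    hence "a (s (a x)) = a (a x)" using p_eq x by simp
    hence "s (a x) = a x" using a_inj a_in s_in x by metis
    thus False using s_neq a_in x by metis
  qed
  ultimately show False by blast
qed

lemma face_a_neq: "x \<in> D \<Longrightarrow> face M (a x) \<noteq> face M x"
  using a_notin_face face_sym in_face a_in by metis

end

definition RC :: "'d cmap \<Rightarrow> 'd cplx \<Rightarrow> ('d set \<times> 'd set) set" where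
  "RC M C = {(face M x, face M (alph M x)) | x. x \<in> darts M \<and> edge M x \<notin> cE C}"

definition tau :: "'d cmap \<Rightarrow> 'd cplx \<Rightarrow> 'd \<Rightarrow> 'd" where
  "tau M C x = (if edge M (sigm M x) \<in> cE C then phi M x else sigm M x)"

locale cplx = tri M g r for M :: "'d cmap" and g r +
  fixes C :: "'d cplx"
  assumes J1: "cE C \<subseteq> edges M" and J2: "cF C \<subseteq> faces M"
    and J3: "\<And>f x. f \<in> cF C \<Longrightarrow> x \<in> f \<Longrightarrow> edge M x \<in> cE C"
begin

abbreviation "E \<equiv> cE C"
abbreviation "W \<equiv> alph M \<circ> sigC M C"
abbreviation "t \<equiv> tau M C"
abbreviation "CD \<equiv> {x \<in> darts M. edge M x \<in> cE C}"

lemma cdart: "edge M x \<in> E \<Longrightarrow> x \<in> D"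
proof -
  assume "edge M x \<in> E"
  then obtain y where y: "y \<in> D" "edge M x = edge M y" using J1 unfolding edges_def by auto
  thus "x \<in> D" using edge_eqD a_in by metis
qed

lemma face_cF_edges: "x \<in> D \<Longrightarrow> face M x \<in> cF C \<Longrightarrow> y \<in> face M x \<Longrightarrow> edge M y \<in> E"
  using J3 by blast

lemma nxt_ex: assumes h: "edge M h \<in> E" shows "\<exists>k. 0 < k \<and> edge M ((s ^^ k) h) \<in> E"
proof -
  have "h \<in> D" using cdart h .
  thus ?thesis using S.per_pos S.per_fix h by (intro exI[of _ "per s h"]) auto
qed

lemma nxt_prop: assumes h: "edge M h \<in> E"
  shows "0 < nxt M C h \<and> edge M ((s ^^ nxt M C h) h) \<in> E"
  unfolding nxt_def by (rule LeastI_ex) (rule nxt_ex[OF h])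

lemma nxt_pos: "edge M h \<in> E \<Longrightarrow> 0 < nxt M C h" using nxt_prop by blast
lemma nxt_C: "edge M h \<in> E \<Longrightarrow> edge M ((s ^^ nxt M C h) h) \<in> E" using nxt_prop by blast
lemma nxt_min: "0 < k \<Longrightarrow> k < nxt M C h \<Longrightarrow> edge M ((s ^^ k) h) \<notin> E"
  unfolding nxt_def using not_less_Least by blast
lemma nxt_le: assumes h: "edge M h \<in> E" shows "nxt M C h \<le> per s h"
proof -
  have "h \<in> D" using cdart h .
  hence "0 < per s h" "edge M ((s ^^ per s h) h) \<in> E" using S.per_pos S.per_fix h by auto
  thus ?thesis using nxt_min by (meson leI)
qed
lemma nxt_eqI: "0 < k \<Longrightarrow> edge M ((s ^^ k) h) \<in> E \<Longrightarrow> (\<And>l. 0 < l \<Longrightarrow> l < k \<Longrightarrow> edge M ((s ^^ l) h) \<notin> E)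
   \<Longrightarrow> nxt M C h = k"
  unfolding nxt_def by (rule Least_equality) (auto simp: not_less[symmetric])

lemma sigC_C: "edge M h \<in> E \<Longrightarrow> edge M (sigC M C h) \<in> E"
  unfolding sigC_def using nxt_C .
lemma sigC_in: "edge M h \<in> E \<Longrightarrow> sigC M C h \<in> D"
  using sigC_C cdart by blast
lemma vertex_sigC: "edge M h \<in> E \<Longrightarrow> vertex M (sigC M C h) = vertex M h"
  unfolding sigC_def using vertex_sn cdart by blast

lemma W_C: "edge M h \<in> E \<Longrightarrow> edge M (W h) \<in> E"
  using sigC_C edge_a sigC_in by simp
lemma W_in: "edge M h \<in> E \<Longrightarrow> W h \<in> D"
  using W_C cdart by blast

lemma sigC_inj: assumes h: "edge M h \<in> E" and h': "edge M h' \<in> E" and eq: "sigC M C h = sigC M C h'"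
  shows "h = h'"
proof -
  have hD: "h \<in> D" and h'D: "h' \<in> D" using cdart h h' by auto
  { fix h h' assume h: "edge M h \<in> E" and h': "edge M h' \<in> E"
      and eq: "sigC M C h = sigC M C h'" and le: "nxt M C h \<le> nxt M C h'"
    have hD: "h \<in> D" and h'D: "h' \<in> D" using cdart h h' by auto
    let ?n = "nxt M C h" and ?n' = "nxt M C h'"
    have "(s ^^ ?n) ((s ^^ (?n' - ?n)) h') = (s ^^ ?n') h'"
      using le fp_add[of ?n "?n' - ?n" s h'] by simp
    also have "\<dots> = (s ^^ ?n) h" using eq unfolding sigC_def by simp
    finally have e: "(s ^^ (?n' - ?n)) h' = h" using S.funpow_cancel sn_in hD h'D by blast
    have "h = h'"
    proof (cases "?n' - ?n = 0")
      case True thus ?thesis using e by simp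
    next
      case False
      moreover have "?n' - ?n < ?n'" using nxt_pos h h' False by simp
      ultimately have "edge M ((s ^^ (?n' - ?n)) h') \<notin> E" using nxt_min by simp
      thus ?thesis using e h by simp
    qed }
  note gen = this
  show ?thesis
  proof (cases "nxt M C h \<le> nxt M C h'")
    case True thus ?thesis using gen h h' eq by blast
  next
    case False thus ?thesis using gen[of h' h] h h' eq by simp
  qed
qed

sublocale WP: permS W CD
proof
  show "finite CD" using fin by simp
  show "\<And>x. x \<in> CD \<Longrightarrow> W x \<in> CD" using W_C W_in by auto
  show "inj_on W CD"
  proof (rule inj_onI)
    fix x y assume "x \<in> CD" "y \<in> CD" "W x = W y"
    hence "sigC M C x = sigC M C y" using a_inj sigC_in by auto
    thus "x = y" using sigC_inj \<open>x \<in> CD\<close> \<open>y \<in> CD\<close> by blast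
  qed
qed

lemma walk_C: "edge M h \<in> E \<Longrightarrow> y \<in> walk M C h \<Longrightarrow> edge M y \<in> E"
  unfolding walk_def using WP.orb_sub[of h] cdart by blast
lemma walk_sym: "edge M h \<in> E \<Longrightarrow> y \<in> walk M C h \<Longrightarrow> walk M C y = walk M C h"
  unfolding walk_def using WP.orb_sym cdart by blast
lemma in_walk: "h \<in> walk M C h" unfolding walk_def using WP.in_orb .
lemma walk_W: "y \<in> walk M C h \<Longrightarrow> W y \<in> walk M C h" unfolding walk_def using WP.orb_step .

lemma t_in: "x \<in> D \<Longrightarrow> t x \<in> D" unfolding tau_def using p_in s_in by auto
lemma t_inj: assumes x: "x \<in> D" and y: "y \<in> D" and eq: "t x = t y" shows "x = y"
proof (cases "edge M (s x) \<in> E")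
  case True note tx = True
  show ?thesis
  proof (cases "edge M (s y) \<in> E")
    case True thus ?thesis using tx eq p_inj x y unfolding tau_def by auto
  next
    case False
    hence "p x = s y" using tx eq unfolding tau_def by auto
    hence "edge M (s y) = edge M (s x)" using p_eq edge_a s_in x by metis
    thus ?thesis using tx False by simp
  qed
next
  case False note tx = False
  show ?thesis
  proof (cases "edge M (s y) \<in> E")
    case True
    hence "p y = s x" using tx eq unfolding tau_def by auto
    hence "edge M (s y) = edge M (s x)" using p_eq edge_a s_in y by metis
    thus ?thesis using tx True by simp
  next
    case False thus ?thesis using tx eq s_inj x y unfolding tau_def by auto
  qed
qed

sublocale TP: permS t D
  using fin t_in t_inj by unfold_locales (auto simp: inj_on_def)

lemma t_s: "edge M (s x) \<notin> E \<Longrightarrow> t x = s x" unfolding tau_def by simp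
lemma t_p: "edge M (s x) \<in> E \<Longrightarrow> t x = p x" unfolding tau_def by simp
lemma face_t: assumes x: "x \<in> D" and "edge M (s x) \<in> E" shows "face M (t x) = face M x"
  using t_p assms face_p by simp

lemma t_corner: assumes h: "edge M h \<in> E" and k: "k < nxt M C h" shows "(t ^^ k) h = (s ^^ k) h"
  using k
proof (induction k)
  case 0 then show ?case by simp
next
  case (Suc k)
  hence "edge M ((s ^^ Suc k) h) \<notin> E" using nxt_min[of "Suc k" h] by blast
  hence "t ((s ^^ k) h) = (s ^^ Suc k) h" using t_s by simp
  thus ?case using Suc by simp
qed

lemma t_nxt: assumes h: "edge M h \<in> E" shows "(t ^^ nxt M C h) h = W h"
proof -
  obtain m where m: "nxt M C h = Suc m" using gr0_implies_Suc[OF nxt_pos[OF h]] by blast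
  have "(t ^^ m) h = (s ^^ m) h" using t_corner h m by simp
  moreover have "edge M (s ((s ^^ m) h)) \<in> E" using nxt_C[OF h] m by simp
  ultimately have "(t ^^ Suc m) h = p ((s ^^ m) h)" using t_p by simp
  also have "\<dots> = a ((s ^^ Suc m) h)" using p_eq by simp
  finally show ?thesis unfolding sigC_def using m by simp
qed

lemma face_cF_walk: assumes h: "h \<in> D" and f: "face M h \<in> cF C" shows "walk M C h = face M h"
proof -
  have "\<And>y. y \<in> orb p h \<Longrightarrow> W y = p y"
  proof -
    fix y assume y: "y \<in> orb p h"
    hence yf: "y \<in> face M h" unfolding face_def .
    have yD: "y \<in> D" using face_sub h yf by auto
    have py: "p y \<in> face M h" using P.orb_step y unfolding face_def .
    have "edge M (s y) = edge M (p y)" using p_eq edge_a s_in yD by simp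
    hence sE: "edge M (s y) \<in> E" using J3 f py by simp
    have yE: "edge M y \<in> E" using J3 f yf by simp
    have "nxt M C y = 1" using sE nxt_eqI[of 1 y] by simp
    thus "W y = p y" unfolding sigC_def using p_eq by simp
  qed
  hence "orb W h = orb p h" by (rule orb_agree_eq)
  thus ?thesis unfolding walk_def face_def .
qed

lemma walk_cF: assumes h: "edge M h \<in> E" and w: "walk M C h \<in> cF C"
  shows "face M h \<in> cF C \<and> nxt M C h = 1"
proof -
  have hD: "h \<in> D" using cdart h .
  obtain y where y: "y \<in> D" "walk M C h = face M y" using w J2 unfolding faces_def by auto
  have "h \<in> face M y" using in_walk y by metis
  hence fh: "face M h = face M y" using face_sym y by blast
  hence fc: "face M h \<in> cF C" using w y by simp
  have "p h \<in> face M h" using face_eq hD by simp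
  hence "edge M (p h) \<in> E" using J3 fc by blast
  hence "edge M (s h) \<in> E" using p_eq edge_a s_in hD by metis
  hence "nxt M C h = 1" using nxt_eqI[of 1 h] by simp
  thus ?thesis using fc by simp
qed

lemma bcorner_of: assumes h: "edge M h \<in> E" and n: "1 < nxt M C h" shows "bcorner M C h"
proof -
  have "walk M C h \<notin> cF C" using walk_cF[OF h] n by auto
  thus ?thesis unfolding bcorner_def using h cdart by blast
qed

lemma ext_unique: assumes "d \<in> ext_brins M C h" "d \<in> ext_brins M C h'"
  "edge M h \<in> E" "edge M h' \<in> E" shows "h = h'"
proof -
  { fix h h' k k' assume h: "edge M h \<in> E" and h': "edge M h' \<in> E"
     and k: "0 < k" "k < nxt M C h" and k': "0 < k'" "k' < nxt M C h'" and le: "k \<le> k'"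
     and eq: "(s ^^ k) h = (s ^^ k') h'"
    have hD: "h \<in> D" and h'D: "h' \<in> D" using cdart h h' by auto
    have "(s ^^ k) ((s ^^ (k' - k)) h') = (s ^^ k') h'"
      using le fp_add[of k "k' - k" s h'] by simp
    hence e: "(s ^^ (k' - k)) h' = h" using eq S.funpow_cancel sn_in hD h'D by metis
    have "h = h'"
    proof (cases "k' - k = 0")
      case True thus ?thesis using e by simp
    next
      case False
      hence "edge M ((s ^^ (k' - k)) h') \<notin> E" using nxt_min k' by simp
      thus ?thesis using e h by simp
    qed }
  note gen = this
  obtain k where k: "0 < k" "k < nxt M C h" "d = (s ^^ k) h" using assms(1) unfolding ext_brins_def by auto
  obtain k' where k': "0 < k'" "k' < nxt M C h'" "d = (s ^^ k') h'" using assms(2) unfolding ext_brins_def by auto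
  show ?thesis
  proof (cases "k \<le> k'")
    case True thus ?thesis using gen[of h h' k k'] assms k k' by simp
  next
    case False thus ?thesis using gen[of h' h k' k] assms k k' by simp
  qed
qed

lemma ext_not_C: "d \<in> ext_brins M C h \<Longrightarrow> edge M d \<notin> E"
  unfolding ext_brins_def using nxt_min by auto

lemma ext_in: "edge M h \<in> E \<Longrightarrow> d \<in> ext_brins M C h \<Longrightarrow> d \<in> D"
  unfolding ext_brins_def using sn_in cdart by auto

lemma ext_vertex: "edge M h \<in> E \<Longrightarrow> d \<in> ext_brins M C h \<Longrightarrow> vertex M d = vertex M h"
  unfolding ext_brins_def using vertex_sn cdart by auto

end

lemma parity_flips:
  fixes b :: "nat \<Rightarrow> bool"
  shows "b n = (b 0 \<noteq> odd (card {i. i < n \<and> b (Suc i) \<noteq> b i}))"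
proof (induction n)
  case 0 then show ?case by simp
next
  case (Suc n)
  have eq: "{i. i < Suc n \<and> b (Suc i) \<noteq> b i} =
      {i. i < n \<and> b (Suc i) \<noteq> b i} \<union> (if b (Suc n) \<noteq> b n then {n} else {})" by (auto simp: less_Suc_eq)
  show ?case
  proof (cases "b (Suc n) \<noteq> b n")
    case True
    hence "card {i. i < Suc n \<and> b (Suc i) \<noteq> b i} = Suc (card {i. i < n \<and> b (Suc i) \<noteq> b i})"
      unfolding eq by simp
    thus ?thesis using Suc True by auto
  next
    case False
    hence "{i. i < Suc n \<and> b (Suc i) \<noteq> b i} = {i. i < n \<and> b (Suc i) \<noteq> b i}" unfolding eq by simp
    thus ?thesis using Suc False by auto
  qed
qed

lemma parity_closed:
  fixes b :: "nat \<Rightarrow> bool"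
  assumes "b n = b 0" shows "even (card {i. i < n \<and> b (Suc i) \<noteq> b i})"
  using parity_flips[of b n] assms by auto

context cplx begin

definition Re :: "'d set \<Rightarrow> ('d set \<times> 'd set) set" where
  "Re e = {(face M x, face M (a x)) | x. x \<in> D \<and> edge M x \<notin> E \<and> edge M x \<noteq> e}"

lemma Re_sym: "(X, Y) \<in> Re e \<Longrightarrow> (Y, X) \<in> Re e"
proof -
  assume "(X, Y) \<in> Re e"
  then obtain x where x: "x \<in> D" "edge M x \<notin> E" "edge M x \<noteq> e" "X = face M x" "Y = face M (a x)"
    unfolding Re_def by blast
  hence "(face M (a x), face M (a (a x))) \<in> Re e" unfolding Re_def using a_in edge_a by fastforce
  thus ?thesis using x by simp
qed

lemma Re_rtr_sym: "(X, Y) \<in> (Re e)\<^sup>* \<Longrightarrow> (Y, X) \<in> (Re e)\<^sup>*"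
proof (induction rule: rtrancl_induct)
  case base then show ?case by simp
next
  case (step Y Z) thus ?case using Re_sym by (meson converse_rtrancl_into_rtrancl)
qed

lemma separating_Re: "separating M C e \<longleftrightarrow> chordal M C e \<and> (\<exists>d\<in>e. (face M d, face M (a d)) \<notin> (Re e)\<^sup>*)"
  unfolding separating_def Re_def by simp

lemma flip:
  assumes e: "e = edge M d0" "e \<notin> E" and d0: "d0 \<in> D"
    and nr: "(face M d0, face M (a d0)) \<notin> (Re e)\<^sup>*" and x: "x \<in> D"
  shows "(((face M d0, face M (t x)) \<in> (Re e)\<^sup>*) \<noteq> ((face M d0, face M x) \<in> (Re e)\<^sup>*))
     \<longleftrightarrow> s x \<in> e"
proof (cases "s x \<in> e")
  case True
  have sx: "s x \<in> D" using s_in x by simp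
  have E1: "edge M (s x) \<notin> E" using True e edge_eqD edge_a d0 unfolding edge_def by auto
  hence tx: "t x = s x" using t_s by simp
  have fx: "face M x = face M (a (s x))" using face_as x by simp
  have "s x = d0 \<or> s x = a d0" using True e unfolding edge_def by auto
  thus ?thesis
  proof
    assume "s x = d0"
    thus ?thesis using tx fx nr True by simp
  next
    assume h: "s x = a d0"
    hence "face M x = face M d0" using fx d0 by simp
    moreover have "(face M d0, face M (a d0)) \<notin> (Re e)\<^sup>*" using nr .
    ultimately show ?thesis using tx h True by simp
  qed
next
  case False
  show ?thesis
  proof (cases "edge M (s x) \<in> E")
    case True
    thus ?thesis using face_t x False by simp
  next
    case notE: False
    hence tx: "t x = s x" using t_s by simp
    have "edge M (s x) \<noteq> e" using False in_edge by metis
    hence R: "(face M (s x), face M (a (s x))) \<in> Re e" unfolding Re_def using notE s_in x by blast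
    have fx: "face M (a (s x)) = face M x" using face_as x by simp
    have "(face M (s x), face M x) \<in> Re e" "(face M x, face M (s x)) \<in> Re e"
      using R fx Re_sym by auto
    hence "((face M d0, face M (s x)) \<in> (Re e)\<^sup>*) = ((face M d0, face M x) \<in> (Re e)\<^sup>*)"
      using rtrancl_into_rtrancl by metis
    thus ?thesis using tx False by simp
  qed
qed

end

locale orbC = cplx M g r C for M :: "'d cmap" and g r C +
  fixes x0 :: 'd
  assumes x0E: "edge M x0 \<in> cE C"
begin

abbreviation "xs i \<equiv> (t ^^ i) x0"
abbreviation "N \<equiv> per t x0"

lemma x0D: "x0 \<in> D" using cdart x0E .
lemma xs_in: "xs i \<in> D" using TP.funpow_in x0D .
lemma N_pos: "0 < N" using TP.per_pos x0D .
lemma xs_N: "xs N = x0" using TP.per_fix x0D .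
lemma xs_mod: "xs i = xs (i mod N)" using TP.funpow_mod x0D .
lemma xs_inj: "i < N \<Longrightarrow> j < N \<Longrightarrow> xs i = xs j \<Longrightarrow> i = j" using TP.per_distinct x0D by blast
lemma xs_Suc: "xs (Suc i) = t (xs i)" by simp
lemma xs_add: "xs (i + j) = (t ^^ i) (xs j)" using fp_add .

lemma rep: "\<exists>c\<le>i. edge M (xs c) \<in> E \<and> i - c < nxt M C (xs c) \<and> xs i = (s ^^ (i - c)) (xs c)
   \<and> xs c \<in> walk M C x0"
proof (induction i)
  case 0 then show ?case using x0E nxt_pos in_walk by auto
next
  case (Suc i)
  then obtain c where c: "c \<le> i" "edge M (xs c) \<in> E" "i - c < nxt M C (xs c)"
    "xs i = (s ^^ (i - c)) (xs c)" "xs c \<in> walk M C x0" by blast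
  show ?case
  proof (cases "Suc i - c < nxt M C (xs c)")
    case True
    have "edge M ((s ^^ Suc (i - c)) (xs c)) \<notin> E" using nxt_min[of "Suc (i - c)" "xs c"] True c by simp
    hence "t (xs i) = (s ^^ Suc (i - c)) (xs c)" using c t_s by simp
    moreover have "Suc (i - c) = Suc i - c" using c by simp
    ultimately show ?thesis using c True by (intro exI[of _ c]) auto
  next
    case False
    hence n: "nxt M C (xs c) = Suc (i - c)" using c by simp
    have "xs (Suc i) = xs (nxt M C (xs c) + c)" using n c by simp
    also have "\<dots> = W (xs c)" using xs_add t_nxt c by simp
    finally have "xs (Suc i) = W (xs c)" .
    moreover have "edge M (W (xs c)) \<in> E" using W_C c by simp
    moreover have "W (xs c) \<in> walk M C x0" using walk_W c by simp
    ultimately show ?thesis using nxt_pos by (intro exI[of _ "Suc i"]) auto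
  qed
qed

lemma pos_C_walk: assumes "edge M (xs i) \<in> E" shows "xs i \<in> walk M C x0"
proof -
  obtain c where c: "c \<le> i" "edge M (xs c) \<in> E" "i - c < nxt M C (xs c)"
    "xs i = (s ^^ (i - c)) (xs c)" "xs c \<in> walk M C x0" using rep by blast
  have "i - c = 0" using nxt_min[of "i - c" "xs c"] c assms by (cases "i - c = 0") auto
  thus ?thesis using c by simp
qed

lemma walk_pos: assumes y: "y \<in> walk M C x0" shows "\<exists>i<N. xs i = y"
proof -
  obtain m where m: "y = (W ^^ m) x0" using y unfolding walk_def orb_def by auto
  have "\<exists>j. (W ^^ m) x0 = xs j"
  proof (induction m)
    case 0 then show ?case by (intro exI[of _ 0]) simp
  next
    case (Suc m)
    then obtain j where j: "(W ^^ m) x0 = xs j" by blast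
    have "edge M ((W ^^ m) x0) \<in> E" using WP.funpow_in x0E x0D by simp
    hence "xs (nxt M C (xs j) + j) = W (xs j)" using xs_add t_nxt j by simp
    moreover have "(W ^^ Suc m) x0 = W (xs j)" using j by (simp only: funpow.simps(2) o_apply)
    ultimately show ?case by metis
  qed
  then obtain j where "y = xs j" using m by blast
  thus ?thesis using xs_mod N_pos by (intro exI[of _ "j mod N"]) auto
qed

lemma corner_steps: assumes c: "edge M (xs c) \<in> E" and l: "l < nxt M C (xs c)"
  shows "xs (c + l) = (s ^^ l) (xs c)"
  using xs_add[of l c] t_corner[OF c l] by (simp add: add.commute)

lemma corner_next: assumes c: "edge M (xs c) \<in> E"
  shows "xs (c + nxt M C (xs c)) = W (xs c)"
  using xs_add[of "nxt M C (xs c)" c] t_nxt[OF c] by (simp add: add.commute)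

lemma corner_bound: assumes c: "edge M (xs c) \<in> E" and cN: "c < N"
  shows "c + nxt M C (xs c) \<le> N"
proof (rule ccontr)
  assume "\<not> ?thesis"
  hence l: "N - c < nxt M C (xs c)" using nxt_pos[OF c] by arith
  have "xs N = (s ^^ (N - c)) (xs c)" using corner_steps[OF c l] cN by simp
  moreover have "0 < N - c" using cN by simp
  ultimately have "edge M (xs N) \<notin> E" using nxt_min l by simp
  thus False using xs_N x0E by simp
qed

lemma ext_pos: assumes y: "y \<in> walk M C x0" and d: "d \<in> ext_brins M C y"
  shows "\<exists>i<N. s (xs i) = d"
proof -
  obtain c where c: "c < N" "xs c = y" using walk_pos y by blast
  obtain k where k: "0 < k" "k < nxt M C y" "d = (s ^^ k) y" using d unfolding ext_brins_def by auto
  have yE: "edge M (xs c) \<in> E" using walk_C x0E y c by simp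
  have "xs (c + (k - 1)) = (s ^^ (k - 1)) y" using corner_steps[OF yE, of "k - 1"] k c by simp
  hence "s (xs (c + (k - 1))) = d" using k by (cases k) auto
  thus ?thesis using xs_mod[of "c + (k - 1)"] N_pos by (intro exI[of _ "(c + (k - 1)) mod N"]) auto
qed

lemma cross_ext: assumes nE: "edge M (s (xs i)) \<notin> E"
  shows "\<exists>y\<in>walk M C x0. s (xs i) \<in> ext_brins M C y"
proof -
  obtain c where c: "c \<le> i" "edge M (xs c) \<in> E" "i - c < nxt M C (xs c)"
    "xs i = (s ^^ (i - c)) (xs c)" "xs c \<in> walk M C x0" using rep by blast
  have si: "s (xs i) = (s ^^ Suc (i - c)) (xs c)" using c by simp
  have "Suc (i - c) \<noteq> nxt M C (xs c)"
  proof
    assume h: "Suc (i - c) = nxt M C (xs c)"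
    have "edge M ((s ^^ nxt M C (xs c)) (xs c)) \<in> E" using nxt_C c by simp
    hence "edge M (s (xs i)) \<in> E" using si h by simp
    thus False using nE by simp
  qed
  hence "Suc (i - c) < nxt M C (xs c)" using c by simp
  hence "s (xs i) \<in> ext_brins M C (xs c)" unfolding ext_brins_def using si by blast
  thus ?thesis using c by blast
qed

lemma walk_bcorner: assumes b: "bcorner M C x0" and y: "y \<in> walk M C x0" shows "bcorner M C y"
  using b walk_sym[OF x0E y] walk_C[OF x0E y] cdart unfolding bcorner_def by metis

end

context cplx begin

lemma chordal_edge: assumes "chordal M C e" and "d0 \<in> e"
  shows "d0 \<in> D" "e = edge M d0" "e \<notin> E"
proof -
  obtain d1 where d1: "d1 \<in> D" "e = edge M d1" using assms unfolding chordal_def edges_def by auto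
  hence "d0 = d1 \<or> d0 = a d1" using assms unfolding edge_def by auto
  thus "d0 \<in> D" using d1 a_in by auto
  show "e = edge M d0" using d1 \<open>d0 = d1 \<or> d0 = a d1\<close> edge_a by auto
  show "e \<notin> E" using assms unfolding chordal_def by blast
qed

end

context orbC begin

lemma cross_even: assumes sep: "separating M C e"
  shows "even (card {i. i < N \<and> s (xs i) \<in> e})"
proof -
  obtain d0 where d0: "d0 \<in> e" "(face M d0, face M (a d0)) \<notin> (Re e)\<^sup>*"
    using sep unfolding separating_Re by blast
  have ch: "chordal M C e" using sep unfolding separating_Re by blast
  have d0D: "d0 \<in> D" and e: "e = edge M d0" "e \<notin> E" using chordal_edge ch d0 by auto
  let ?b = "\<lambda>i. (face M d0, face M (xs i)) \<in> (Re e)\<^sup>*"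
  have "\<And>i. (?b (Suc i) \<noteq> ?b i) = (s (xs i) \<in> e)"
    using flip[OF e d0D d0(2) xs_in] by simp
  hence "{i. i < N \<and> ?b (Suc i) \<noteq> ?b i} = {i. i < N \<and> s (xs i) \<in> e}" by simp
  moreover have "?b N = ?b 0" using xs_N by simp
  ultimately show ?thesis using parity_closed[of ?b N] by simp
qed

end

context cplx begin

lemma merge_not_sep: assumes m: "merge_edge M C e" shows "\<not> separating M C e"
proof
  assume sep: "separating M C e"
  obtain d h d' h' where dh: "d \<in> e" "d' \<in> e" "d \<noteq> d'" "is_ext M C d h" "is_ext M C d' h'"
    "walk M C h \<noteq> walk M C h'" using m unfolding merge_edge_def by blast
  have ch: "chordal M C e" using m unfolding merge_edge_def by blast
  have dD: "d \<in> D" and e: "e = edge M d" "e \<notin> E" using chordal_edge ch dh by auto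
  have d': "d' = a d" using dh e unfolding edge_def by auto
  have hE: "edge M h \<in> E" and h'E: "edge M h' \<in> E"
    using dh unfolding is_ext_def bcorner_def by auto
  interpret O: orbC M g r C h using hE by unfold_locales
  obtain i0 where i0: "i0 < O.N" "s (O.xs i0) = d"
    using O.ext_pos in_walk dh unfolding is_ext_def by blast
  have "{i. i < O.N \<and> s (O.xs i) \<in> e} = {i0}"
  proof (rule set_eqI, rule iffI)
    fix i assume i: "i \<in> {i. i < O.N \<and> s (O.xs i) \<in> e}"
    hence iN: "i < O.N" and si: "s (O.xs i) = d \<or> s (O.xs i) = a d" using e unfolding edge_def by auto
    show "i \<in> {i0}"
    proof (cases "s (O.xs i) = d")
      case True
      hence "O.xs i = O.xs i0" using i0 s_inj O.xs_in by metis
      thus ?thesis using O.xs_inj iN i0 by simp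
    next
      case False
      hence sa: "s (O.xs i) = d'" using si d' by simp
      hence nE: "edge M (s (O.xs i)) \<notin> E" using e edge_a dD d' by simp
      obtain y where y: "y \<in> walk M C h" "s (O.xs i) \<in> ext_brins M C y" using O.cross_ext nE by blast
      have yE: "edge M y \<in> E" using walk_C hE y by simp
      have "y = h'" using ext_unique[of d' y h'] y sa dh yE h'E unfolding is_ext_def by simp
      hence "walk M C h' = walk M C h" using walk_sym hE y by simp
      thus ?thesis using dh by simp
    qed
  next
    fix i assume "i \<in> {i0}" thus "i \<in> {i. i < O.N \<and> s (O.xs i) \<in> e}" using i0 dh by simp
  qed
  moreover have "even (card {i. i < O.N \<and> s (O.xs i) \<in> e})" using O.cross_even[OF sep] .
  ultimately show False by simp
qed

lemma RC_sym: "(X, Y) \<in> RC M C \<Longrightarrow> (Y, X) \<in> RC M C"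
proof -
  assume "(X, Y) \<in> RC M C"
  then obtain x where x: "x \<in> D" "edge M x \<notin> E" "X = face M x" "Y = face M (a x)"
    unfolding RC_def by blast
  hence "(face M (a x), face M (a (a x))) \<in> RC M C" unfolding RC_def using a_in edge_a by fastforce
  thus ?thesis using x by simp
qed

end

lemma rtrancl_remove:
  assumes sym: "\<And>X Y. (X, Y) \<in> R \<Longrightarrow> (Y, X) \<in> R"
    and B: "\<And>b1 b2. b1 \<notin> F \<Longrightarrow> b2 \<notin> F \<Longrightarrow> (\<exists>X\<in>F. (X, b1) \<in> R) \<Longrightarrow> (\<exists>X\<in>F. (X, b2) \<in> R)
        \<Longrightarrow> (b1, b2) \<in> {(X, Y). (X, Y) \<in> R \<and> X \<notin> F \<and> Y \<notin> F}\<^sup>*"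
    and path: "(X, Y) \<in> R\<^sup>*" and X: "X \<notin> F"
  shows "(Y \<notin> F \<longrightarrow> (X, Y) \<in> {(X, Y). (X, Y) \<in> R \<and> X \<notin> F \<and> Y \<notin> F}\<^sup>*)
       \<and> (Y \<in> F \<longrightarrow> (\<exists>b. b \<notin> F \<and> (\<exists>Z\<in>F. (Z, b) \<in> R) \<and> (X, b) \<in> {(X, Y). (X, Y) \<in> R \<and> X \<notin> F \<and> Y \<notin> F}\<^sup>*))"
  using path
proof (induction rule: rtrancl_induct)
  case base then show ?case using X by simp
next
  case (step Y Z)
  let ?R' = "{(X, Y). (X, Y) \<in> R \<and> X \<notin> F \<and> Y \<notin> F}"
  show ?case
  proof (cases "Y \<in> F")
    case False
    hence XY: "(X, Y) \<in> ?R'\<^sup>*" using step by blast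
    show ?thesis
    proof (cases "Z \<in> F")
      case True
      have "\<exists>Z'\<in>F. (Z', Y) \<in> R" using True step sym by blast
      thus ?thesis using XY False True by blast
    next
      case False
      hence "(Y, Z) \<in> ?R'" using step \<open>Y \<notin> F\<close> by blast
      thus ?thesis using XY False by (meson rtrancl.rtrancl_into_rtrancl)
    qed
  next
    case True
    then obtain b where b: "b \<notin> F" "\<exists>Z\<in>F. (Z, b) \<in> R" "(X, b) \<in> ?R'\<^sup>*" using step by blast
    show ?thesis
    proof (cases "Z \<in> F")
      case True thus ?thesis using b by blast
    next
      case False
      have "\<exists>Z'\<in>F. (Z', Z) \<in> R" using \<open>Y \<in> F\<close> step by blast
      hence "(b, Z) \<in> ?R'\<^sup>*" using B b False by blast
      thus ?thesis using b False by (meson rtrancl_trans)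
    qed
  qed
qed


context cplx begin

lemma AV:
  assumes x: "x \<in> D" and le: "l1 \<le> l2"
    and H: "\<And>l. l1 \<le> l \<Longrightarrow> l < l2 \<Longrightarrow> edge M (s ((s ^^ l) x)) \<notin> E
          \<and> face M ((s ^^ l) x) \<notin> X \<and> face M (s ((s ^^ l) x)) \<notin> X"
  shows "(face M ((s ^^ l1) x), face M ((s ^^ l2) x)) \<in> {(A, B). (A, B) \<in> RC M C \<and> A \<notin> X \<and> B \<notin> X}\<^sup>*"
  using le H
proof (induction l2 rule: dec_induct)
  case base then show ?case by simp
next
  case (step l)
  let ?y = "(s ^^ l) x"
  have y: "?y \<in> D" using sn_in x by simp
  have h: "edge M (s ?y) \<notin> E" "face M ?y \<notin> X" "face M (s ?y) \<notin> X" using step.prems[of l] step.hyps by auto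
  have "(face M (s ?y), face M (a (s ?y))) \<in> RC M C" unfolding RC_def using h s_in y by blast
  hence "(face M ?y, face M (s ?y)) \<in> RC M C" using RC_sym face_as y by simp
  hence "(face M ?y, face M ((s ^^ Suc l) x)) \<in> {(A, B). (A, B) \<in> RC M C \<and> A \<notin> X \<and> B \<notin> X}"
    using h by simp
  moreover have "(face M ((s ^^ l1) x), face M ?y) \<in> {(A, B). (A, B) \<in> RC M C \<and> A \<notin> X \<and> B \<notin> X}\<^sup>*"
    using step by simp
  ultimately show ?case by (meson rtrancl.rtrancl_into_rtrancl)
qed

lemma RC_rtr_sym: "(X, Y) \<in> (RC M C)\<^sup>* \<Longrightarrow> (Y, X) \<in> (RC M C)\<^sup>*"
proof (induction rule: rtrancl_induct)
  case base then show ?case by simp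
next
  case (step Y Z) thus ?case using RC_sym by (meson converse_rtrancl_into_rtrancl)
qed

end

context tri begin

lemma face_before: assumes y: "y \<in> D" shows "face M ((s ^^ (per s y - 1)) y) = face M (a y)"
proof -
  have P: "0 < per s y" using S.per_pos y by simp
  have "s ((s ^^ (per s y - 1)) y) = (s ^^ per s y) y" using P by (metis Suc_pred' funpow.simps(2) o_apply)
  hence "s ((s ^^ (per s y - 1)) y) = y" using S.per_fix y by simp
  hence "p ((s ^^ (per s y - 1)) y) = a y" using p_eq by simp
  thus ?thesis using face_p sn_in y by metis
qed


definition "RF = face M r"
definition "C0 = init_cplx M r"

lemma C0_E: "cE C0 = edge M ` face M r" unfolding C0_def init_cplx_def cE_def Let_def by simp
lemma C0_F: "cF C0 = {face M r}" unfolding C0_def init_cplx_def cF_def Let_def by simp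
lemma C0_V: "cV C0 = {vertex M x |x. x \<in> \<Union> (cE C0)}" unfolding C0_def init_cplx_def cV_def cE_def Let_def by simp

lemma C0_cplx: "cplx M g r C0"
proof
  show "cE C0 \<subseteq> edges M" unfolding C0_E edges_def using face_sub r_in by auto
  show "cF C0 \<subseteq> faces M" unfolding C0_F faces_def using r_in by auto
  show "\<And>f x. f \<in> cF C0 \<Longrightarrow> x \<in> f \<Longrightarrow> edge M x \<in> cE C0" unfolding C0_F C0_E by auto
qed

lemma C0_edge: assumes y: "y \<in> D" and "face M y \<noteq> RF" "face M (s y) \<noteq> RF"
  shows "edge M (s y) \<notin> cE C0"
proof
  assume "edge M (s y) \<in> cE C0"
  then obtain z where z: "z \<in> face M r" "edge M (s y) = edge M z" unfolding C0_E by auto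
  have zD: "z \<in> D" using face_sub r_in z by auto
  have "s y = z \<or> s y = a z" using z edge_eqD by blast
  thus False
  proof
    assume "s y = z" thus False using z assms face_sym r_in unfolding RF_def by metis
  next
    assume "s y = a z"
    hence "z = p y" using p_eq zD by (metis aa)
    hence "face M y = face M z" using face_p y by simp
    thus False using z assms face_sym r_in unfolding RF_def by metis
  qed
qed

lemma RF_unique: assumes x: "x \<in> D" and i: "face M ((s ^^ i) x) = RF" and j: "face M ((s ^^ j) x) = RF"
  shows "i mod per s x = j mod per s x"
proof -
  have "(s ^^ i) x \<in> face M r" "(s ^^ j) x \<in> face M r"
    using i j in_face unfolding RF_def by metis+
  moreover have "vertex M ((s ^^ i) x) = vertex M ((s ^^ j) x)" using vertex_sn x by simp
  ultimately have "(s ^^ i) x = (s ^^ j) x" using face_one_per_vertex r_in by blast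
  hence "(s ^^ (i mod per s x)) x = (s ^^ (j mod per s x)) x" using S.funpow_mod x by metis
  thus ?thesis using S.per_distinct x S.per_pos by simp
qed

lemma vertex_conn0: assumes x: "x \<in> D" and i: "face M ((s ^^ i) x) \<noteq> RF" and j: "face M ((s ^^ j) x) \<noteq> RF"
  shows "(face M ((s ^^ i) x), face M ((s ^^ j) x)) \<in> (RC M C0)\<^sup>*"
proof -
  interpret C: cplx M g r C0 using C0_cplx .
  let ?P = "per s x"
  have P: "0 < ?P" using S.per_pos x by simp
  have modeq: "\<And>n. (s ^^ n) x = (s ^^ (n mod ?P)) x" using S.funpow_mod x by blast
  have main: "\<And>i j. i \<le> j \<Longrightarrow> j < ?P \<Longrightarrow> face M ((s ^^ i) x) \<noteq> RF \<Longrightarrow> face M ((s ^^ j) x) \<noteq> RF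
     \<Longrightarrow> (face M ((s ^^ i) x), face M ((s ^^ j) x)) \<in> (RC M C0)\<^sup>*"
  proof -
    fix i j assume ij: "i \<le> j" "j < ?P" "face M ((s ^^ i) x) \<noteq> RF" "face M ((s ^^ j) x) \<noteq> RF"
    have AVX: "\<And>l1 l2. l1 \<le> l2 \<Longrightarrow> (\<And>l. l1 \<le> l \<Longrightarrow> l \<le> l2 \<Longrightarrow> face M ((s ^^ l) x) \<noteq> RF)
        \<Longrightarrow> (face M ((s ^^ l1) x), face M ((s ^^ l2) x)) \<in> (RC M C0)\<^sup>*"
    proof -
      fix l1 l2 :: nat assume le: "l1 \<le> l2" and nr: "\<And>l. l1 \<le> l \<Longrightarrow> l \<le> l2 \<Longrightarrow> face M ((s ^^ l) x) \<noteq> RF"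
      have "(face M ((s ^^ l1) x), face M ((s ^^ l2) x)) \<in> {(A, B). (A, B) \<in> RC M C0 \<and> A \<notin> {} \<and> B \<notin> {}}\<^sup>*"
      proof (rule C.AV[OF x le])
        fix l assume l: "l1 \<le> l" "l < l2"
        have "face M ((s ^^ l) x) \<noteq> RF" "face M ((s ^^ Suc l) x) \<noteq> RF" using nr[of l] nr[of "Suc l"] l by auto
        hence "edge M (s ((s ^^ l) x)) \<notin> cE C0" using C0_edge[of "(s ^^ l) x"] sn_in[OF x, of l] by simp
        thus "edge M (s ((s ^^ l) x)) \<notin> cE C0 \<and> face M ((s ^^ l) x) \<notin> {} \<and> face M (s ((s ^^ l) x)) \<notin> {}"
          by simp
      qed
      thus "(face M ((s ^^ l1) x), face M ((s ^^ l2) x)) \<in> (RC M C0)\<^sup>*" by simp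
    qed
    show "(face M ((s ^^ i) x), face M ((s ^^ j) x)) \<in> (RC M C0)\<^sup>*"
    proof (cases "\<forall>l. i \<le> l \<and> l \<le> j \<longrightarrow> face M ((s ^^ l) x) \<noteq> RF")
      case True thus ?thesis using AVX ij by blast
    next
      case False
      then obtain k where k: "i \<le> k" "k \<le> j" "face M ((s ^^ k) x) = RF" by blast
      have ki: "i < k" "k < j" using k ij by (auto simp: le_less)
      have nr: "\<And>l. j \<le> l \<Longrightarrow> l \<le> i + ?P \<Longrightarrow> face M ((s ^^ l) x) \<noteq> RF"
      proof
        fix l assume l: "j \<le> l" "l \<le> i + ?P" "face M ((s ^^ l) x) = RF"
        hence "l mod ?P = k mod ?P" using RF_unique[OF x] k by blast
        moreover have "k mod ?P = k" using ki ij by simp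
        moreover have "l mod ?P \<noteq> k"
        proof (cases "l < ?P")
          case True thus ?thesis using l ki by simp
        next
          case False
          hence "l mod ?P = l - ?P" using l ij by (simp add: le_mod_geq)
          thus ?thesis using l ki False by simp
        qed
        ultimately show False by simp
      qed
      have "(face M ((s ^^ j) x), face M ((s ^^ (i + ?P)) x)) \<in> (RC M C0)\<^sup>*"
        using AVX[of j "i + ?P"] nr ij by simp
      moreover have "(s ^^ (i + ?P)) x = (s ^^ i) x" using modeq[of "i + ?P"] modeq[of i] by simp
      ultimately show ?thesis using C.RC_rtr_sym by simp
    qed
  qed
  have i': "face M ((s ^^ (i mod ?P)) x) \<noteq> RF" and j': "face M ((s ^^ (j mod ?P)) x) \<noteq> RF"
    using i j modeq by metis+
  show ?thesis
  proof (cases "i mod ?P \<le> j mod ?P")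
    case True thus ?thesis using main[OF True _ i' j'] P modeq by (metis mod_less_divisor)
  next
    case False
    hence "(face M ((s ^^ (j mod ?P)) x), face M ((s ^^ (i mod ?P)) x)) \<in> (RC M C0)\<^sup>*"
      using main[of "j mod ?P" "i mod ?P"] P i' j' by simp
    thus ?thesis using C.RC_rtr_sym modeq by metis
  qed
qed

definition "good0 y \<longleftrightarrow> (\<forall>l. face M ((s ^^ l) y) \<noteq> RF \<longrightarrow> (face M ((s ^^ l) y), face M (a r)) \<in> (RC M C0)\<^sup>*)"

lemma good0_I: assumes y: "y \<in> D" and l0: "face M ((s ^^ l0) y) \<noteq> RF"
  "(face M ((s ^^ l0) y), face M (a r)) \<in> (RC M C0)\<^sup>*" shows "good0 y"
  unfolding good0_def using vertex_conn0[OF y _ l0(1)] l0(2) by (meson rtrancl_trans)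

lemma good0_s: "y \<in> D \<Longrightarrow> good0 y \<Longrightarrow> good0 (s y)"
  unfolding good0_def by (metis funpow.simps(2) funpow_swap1 o_apply)

lemma good0_a: assumes y: "y \<in> D" and g: "good0 y" shows "good0 (a y)"
proof -
  have ay: "a y \<in> D" using a_in y by simp
  have f1: "face M ((s ^^ (per s (a y) - 1)) (a y)) = face M y" using face_before[of "a y"] ay y by simp
  have f2: "face M ((s ^^ (per s y - 1)) y) = face M (a y)" using face_before y by simp
  show ?thesis
  proof (cases "face M y = RF")
    case False
    hence "(face M ((s ^^ 0) y), face M (a r)) \<in> (RC M C0)\<^sup>*" using g unfolding good0_def by (metis funpow_0)
    thus ?thesis using good0_I[OF ay, of "per s (a y) - 1"] f1 False by simp
  next
    case True
    hence nf: "face M (a y) \<noteq> RF" using face_a_neq y by metis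
    hence "face M ((s ^^ (per s y - 1)) y) \<noteq> RF" using f2 by simp
    hence "(face M ((s ^^ (per s y - 1)) y), face M (a r)) \<in> (RC M C0)\<^sup>*"
      using g unfolding good0_def by blast
    thus ?thesis using good0_I[OF ay, of 0] f2 nf by simp
  qed
qed

lemma good0_r: "good0 r"
proof -
  have f2: "face M ((s ^^ (per s r - 1)) r) = face M (a r)" using face_before r_in by simp
  have "face M (a r) \<noteq> RF" using face_a_neq r_in unfolding RF_def by simp
  thus ?thesis using good0_I[OF r_in, of "per s r - 1"] f2 by simp
qed

lemma all_good0: assumes y: "y \<in> D" shows "good0 y"
proof -
  have MC: "map_connected M" using T unfolding triangulation_def by blast
  hence "(r, y) \<in> ({(d, a d) | d. d \<in> D} \<union> {(d, s d) | d. d \<in> D})\<^sup>*"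
    using r_in y unfolding map_connected_def by blast
  thus ?thesis
  proof (induction rule: rtrancl_induct)
    case base then show ?case using good0_r by simp
  next
    case (step u v)
    thus ?case using good0_a good0_s by blast
  qed
qed

lemma C0_Dconn: assumes X: "X \<in> faces M - cF C0" and Y: "Y \<in> faces M - cF C0"
  shows "(X, Y) \<in> (RC M C0)\<^sup>*"
proof -
  interpret C: cplx M g r C0 using C0_cplx .
  have "\<And>Z. Z \<in> faces M - cF C0 \<Longrightarrow> (Z, face M (a r)) \<in> (RC M C0)\<^sup>*"
  proof -
    fix Z assume Z: "Z \<in> faces M - cF C0"
    then obtain z where z: "z \<in> D" "Z = face M z" "Z \<noteq> RF" unfolding faces_def C0_F RF_def by auto
    thus "(Z, face M (a r)) \<in> (RC M C0)\<^sup>*" using all_good0[OF z(1)] unfolding good0_def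
      by (metis funpow_0)
  qed
  thus ?thesis using X Y C.RC_rtr_sym by (meson rtrancl_trans)
qed

end

context cplx begin

definition "Fan h = ext_faces M C h"
definition "En h = {edge M d | d f. f \<in> Fan h \<and> d \<in> f}"

lemma conq_E: "cE (conquer M C h) = E \<union> En h"
  unfolding conquer_def Let_def cE_def En_def Fan_def by simp
lemma conq_F: "cF (conquer M C h) = cF C \<union> Fan h"
  unfolding conquer_def Let_def cF_def Fan_def by simp
lemma conq_V: "cV (conquer M C h) = cV C \<union> {vertex M x | x. x \<in> \<Union> (En h)}"
  unfolding conquer_def Let_def cV_def En_def Fan_def by simp

lemma Fan_iff: "X \<in> Fan h \<longleftrightarrow> (\<exists>k < nxt M C h. X = face M ((s ^^ k) h))"
  unfolding Fan_def ext_faces_def by auto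

lemma En_iff: assumes hE: "edge M h \<in> E" and x: "x \<in> D"
  shows "edge M x \<in> En h \<longleftrightarrow> face M x \<in> Fan h \<or> face M (a x) \<in> Fan h"
proof
  assume "edge M x \<in> En h"
  then obtain d f where df: "f \<in> Fan h" "d \<in> f" "edge M x = edge M d" unfolding En_def by auto
  obtain k where k: "k < nxt M C h" "f = face M ((s ^^ k) h)" using df Fan_iff by auto
  have hD: "h \<in> D" using cdart hE .
  have fd: "face M d = f" using df k face_sym sn_in hD by blast
  have "x = d \<or> x = a d" using df edge_eqD by blast
  thus "face M x \<in> Fan h \<or> face M (a x) \<in> Fan h"
  proof
    assume "x = d" thus ?thesis using fd df by simp
  next
    assume "x = a d"
    hence "a x = d" using x aa by (metis a_in face_sub df k hD sn_in subsetD)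
    thus ?thesis using fd df by simp
  qed
next
  assume "face M x \<in> Fan h \<or> face M (a x) \<in> Fan h"
  thus "edge M x \<in> En h"
  proof
    assume "face M x \<in> Fan h" thus ?thesis unfolding En_def using in_face by blast
  next
    assume "face M (a x) \<in> Fan h"
    hence "edge M (a x) \<in> En h" unfolding En_def using in_face by blast
    thus ?thesis using edge_a x by simp
  qed
qed

lemma RC_conq: assumes hE: "edge M h \<in> E"
  shows "RC M (conquer M C h) = {(A, B). (A, B) \<in> RC M C \<and> A \<notin> Fan h \<and> B \<notin> Fan h}"
proof (rule set_eqI, rule iffI)
  fix z assume "z \<in> RC M (conquer M C h)"
  then obtain x where x: "x \<in> D" "edge M x \<notin> cE (conquer M C h)" "z = (face M x, face M (a x))"
    unfolding RC_def by blast
  hence "edge M x \<notin> E" "edge M x \<notin> En h" using conq_E by auto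
  thus "z \<in> {(A, B). (A, B) \<in> RC M C \<and> A \<notin> Fan h \<and> B \<notin> Fan h}"
    using En_iff[OF hE x(1)] x unfolding RC_def by blast
next
  fix z assume "z \<in> {(A, B). (A, B) \<in> RC M C \<and> A \<notin> Fan h \<and> B \<notin> Fan h}"
  then obtain x where x: "x \<in> D" "edge M x \<notin> E" "z = (face M x, face M (a x))"
    "face M x \<notin> Fan h" "face M (a x) \<notin> Fan h" unfolding RC_def by auto
  hence "edge M x \<notin> cE (conquer M C h)" using conq_E En_iff[OF hE x(1)] by auto
  thus "z \<in> RC M (conquer M C h)" unfolding RC_def using x by blast
qed

lemma fresh: assumes fr: "free_corner M r C h" and d: "d \<in> ext_brins M C h"
  and w: "w \<in> vertex M (a d)" shows "edge M w \<notin> E"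
proof
  assume wE: "edge M w \<in> E"
  have bh: "bcorner M C h" using fr unfolding free_corner_def by blast
  have hE: "edge M h \<in> E" using bh unfolding bcorner_def by blast
  have dD: "d \<in> D" using ext_in hE d .
  have adD: "a d \<in> D" using a_in dD .
  have wD: "w \<in> D" using cdart wE .
  have "a d \<in> vertex M w" using w vertex_sym adD in_vertex by metis
  then obtain m where m: "a d = (s ^^ m) w" unfolding vertex_def orb_def by auto
  have adE: "edge M (a d) \<notin> E" using ext_not_C d edge_a dD by simp
  let ?K = "{j. j \<le> m \<and> edge M ((s ^^ j) w) \<in> E}"
  have K0: "0 \<in> ?K" using wE by simp
  have Kf: "finite ?K" by simp
  obtain j0 where j0: "j0 = Max ?K" by simp
  have j0K: "j0 \<in> ?K" using Max_in[OF Kf] K0 j0 by blast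
  have j0max: "\<And>j. j \<in> ?K \<Longrightarrow> j \<le> j0" using Max_ge[OF Kf] j0 by blast
  have j0m: "j0 < m" using j0K adE m by (cases "j0 = m") auto
  let ?H = "(s ^^ j0) w"
  have HE: "edge M ?H \<in> E" using j0K by simp
  have notE: "\<And>l. 0 < l \<Longrightarrow> l \<le> m - j0 \<Longrightarrow> edge M ((s ^^ l) ?H) \<notin> E"
  proof
    fix l assume l: "0 < l" "l \<le> m - j0" "edge M ((s ^^ l) ?H) \<in> E"
    have "(s ^^ l) ?H = (s ^^ (l + j0)) w" using fp_add by metis
    hence "l + j0 \<in> ?K" using l by simp
    hence "l + j0 \<le> j0" using j0max by blast
    thus False using l by simp
  qed
  have ad: "a d = (s ^^ (m - j0)) ?H" using m j0m fp_add[of "m - j0" j0 s w] by simp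
  have nx: "m - j0 < nxt M C ?H"
  proof (rule ccontr)
    assume "\<not> ?thesis"
    hence "nxt M C ?H \<le> m - j0" by simp
    thus False using notE[of "nxt M C ?H"] nxt_C[OF HE] nxt_pos[OF HE] by simp
  qed
  hence adext: "a d \<in> ext_brins M C ?H" unfolding ext_brins_def using ad j0m by auto
  have "1 < nxt M C ?H" using nx j0m by simp
  hence bH: "bcorner M C ?H" using bcorner_of HE by simp
  have "chordal M C (edge M d)"
    unfolding chordal_def
  proof (intro conjI)
    show "edge M d \<in> edges M" unfolding edges_def using dD by blast
    show "edge M d \<notin> E" using ext_not_C d .
    have "is_ext M C d h" "is_ext M C (a d) ?H" unfolding is_ext_def using bh d bH adext by auto
    thus "\<forall>x\<in>edge M d. \<exists>h. is_ext M C x h" unfolding edge_def by blast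
  qed
  thus False using fr d unfolding free_corner_def by blast
qed

end

context cplx begin

lemma vertex_ssn: "x \<in> D \<Longrightarrow> vertex M (s ((s ^^ n) x)) = vertex M x"
  using vertex_sn[of x "Suc n"] by simp

definition "Gf h k = face M (a (p (p ((s ^^ k) h))))"
definition "Rr h = {(A, B). (A, B) \<in> RC M C \<and> A \<notin> Fan h \<and> B \<notin> Fan h}"

lemma Rr_sym: "(A, B) \<in> Rr h \<Longrightarrow> (B, A) \<in> Rr h"
  unfolding Rr_def using RC_sym by blast

lemma Rr_rtr_sym: "(A, B) \<in> (Rr h)\<^sup>* \<Longrightarrow> (B, A) \<in> (Rr h)\<^sup>*"
proof (induction rule: rtrancl_induct)
  case base then show ?case by simp
next
  case (step Y Z) thus ?case using Rr_sym by (meson converse_rtrancl_into_rtrancl)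
qed

lemma B_sub: assumes hE: "edge M h \<in> E" and X: "X \<in> Fan h" and R: "(X, b) \<in> RC M C" and b: "b \<notin> Fan h"
  shows "\<exists>k < nxt M C h. b = Gf h k"
proof -
  have hD: "h \<in> D" using cdart hE .
  obtain k where k: "k < nxt M C h" "X = face M ((s ^^ k) h)" using X Fan_iff by auto
  obtain x where x: "x \<in> D" "edge M x \<notin> E" "X = face M x" "b = face M (a x)" using R unfolding RC_def by blast
  let ?y = "(s ^^ k) h"
  have yD: "?y \<in> D" using sn_in hD by simp
  have "x \<in> face M ?y" using x k face_iff yD by metis
  hence "x = ?y \<or> x = p ?y \<or> x = p (p ?y)" using face_eq yD by simp
  moreover have "x \<noteq> ?y"
  proof
    assume xy: "x = ?y"
    show False
    proof (cases k)
      case 0 thus False using xy x hE by simp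
    next
      case (Suc k')
      have "a ?y = p ((s ^^ k') h)" using Suc p_eq by simp
      hence bb: "b = face M ((s ^^ k') h)" using x xy face_p sn_in hD by simp
      have "k' < nxt M C h" using k Suc by simp
      hence "b \<in> Fan h" using Fan_iff bb by blast
      thus False using b by simp
    qed
  qed
  moreover have "x \<noteq> p ?y"
  proof
    assume xy: "x = p ?y"
    hence xa: "x = a ((s ^^ Suc k) h)" using p_eq by simp
    have "Suc k \<noteq> nxt M C h" using nxt_C[OF hE] x xa edge_a sn_in hD by (metis)
    hence "Suc k < nxt M C h" using k by simp
    moreover have "b = face M ((s ^^ Suc k) h)" using x xa aa[OF sn_in[OF hD, of "Suc k"]] by simp
    ultimately show False using b Fan_iff by blast
  qed
  ultimately have "x = p (p ?y)" by blast
  thus ?thesis using x k unfolding Gf_def by blast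
qed

lemma G_step: assumes fr: "free_corner M r C h" and kn: "Suc k < nxt M C h"
  shows "(Gf h k \<in> Fan h \<longleftrightarrow> Gf h (Suc k) \<in> Fan h)
       \<and> (Gf h k \<notin> Fan h \<longrightarrow> (Gf h k, Gf h (Suc k)) \<in> (Rr h)\<^sup>*)"
proof -
  have bh: "bcorner M C h" using fr unfolding free_corner_def by blast
  have hE: "edge M h \<in> E" using bh unfolding bcorner_def by blast
  have hD: "h \<in> D" using cdart hE .
  let ?yk = "(s ^^ k) h" and ?y1 = "(s ^^ Suc k) h"
  have ykD: "?yk \<in> D" and y1D: "?y1 \<in> D" using sn_in hD by blast+
  have y1ext: "?y1 \<in> ext_brins M C h" unfolding ext_brins_def using kn by blast
  define z where "z = a ?y1"
  have zD: "z \<in> D" using a_in y1D z_def by simp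
  have fz: "\<And>w. w \<in> vertex M z \<Longrightarrow> edge M w \<notin> E" using fresh[OF fr y1ext] z_def by simp
  define Q where "Q = per s z"
  have Q1: "Q \<noteq> 1"
  proof
    assume "Q = 1" hence "(s ^^ 1) z = z" using S.per_fix[OF zD] Q_def by simp
    thus False using s_neq zD by simp
  qed
  have "0 < Q" using S.per_pos[OF zD] Q_def by simp
  hence Q2: "2 \<le> Q" using Q1 by linarith
  have sQ: "\<And>l. (s ^^ l) z = (s ^^ (l mod Q)) z" using S.funpow_mod zD Q_def by blast
  have pz: "p ?yk = z" using p_eq z_def by simp
  have Gk: "Gf h k = face M ((s ^^ 1) z)"
  proof -
    have "p (p ?yk) = a (s z)" using pz p_eq by simp
    hence "a (p (p ?yk)) = s z" using s_in zD by simp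
    thus ?thesis unfolding Gf_def by simp
  qed
  define w1 where "w1 = p (p ?y1)"
  have w1D: "w1 \<in> D" using p_in y1D w1_def by simp
  have sw1: "s w1 = z"
  proof -
    have "a (s w1) = ?y1" using ppp[OF y1D] p_eq w1_def by simp
    hence "a (a (s w1)) = a ?y1" by simp
    thus ?thesis using z_def aa[OF s_in[OF w1D]] by simp
  qed
  have sQ1: "s ((s ^^ (Q - 1)) z) = z"
  proof -
    have "Q = Suc (Q - 1)" using Q2 by simp
    hence "s ((s ^^ (Q - 1)) z) = (s ^^ Q) z" by (metis funpow.simps(2) o_apply)
    thus ?thesis using S.per_fix[OF zD] Q_def by simp
  qed
  have w1Q: "w1 = (s ^^ (Q - 1)) z" using s_inj[OF w1D sn_in[OF zD, of "Q - 1"]] sw1 sQ1 by simp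
  have Gk1: "Gf h (Suc k) = face M ((s ^^ (Q - 2)) z)"
  proof -
    have "Q - 1 = Suc (Q - 2)" using Q2 by simp
    hence "s ((s ^^ (Q - 2)) z) = (s ^^ (Q - 1)) z" by simp
    hence "p ((s ^^ (Q - 2)) z) = a w1" using p_eq w1Q by simp
    hence "face M (a w1) = face M ((s ^^ (Q - 2)) z)" using face_p[OF sn_in[OF zD, of "Q - 2"]] by simp
    thus ?thesis unfolding Gf_def w1_def by simp
  qed
  have fanz: "face M z \<in> Fan h"
  proof -
    have "face M z = face M ?yk" using pz face_p ykD by metis
    moreover have "k < nxt M C h" using kn by simp
    ultimately show ?thesis using Fan_iff by blast
  qed
  have fanw1: "face M ((s ^^ (Q - 1)) z) \<in> Fan h"
  proof -
    have "face M w1 = face M ?y1" using w1_def face_p p_in y1D by metis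
    thus ?thesis using Fan_iff kn w1Q by auto
  qed
  have atu: "\<And>l. face M ((s ^^ l) z) \<in> Fan h \<Longrightarrow> (s ^^ l) z = z \<or> (s ^^ l) z = (s ^^ (Q - 1)) z"
  proof -
    fix l assume fl: "face M ((s ^^ l) z) \<in> Fan h"
    let ?w = "(s ^^ l) z"
    have wD: "?w \<in> D" using sn_in zD by simp
    have vw: "vertex M ?w = vertex M (a ?y1)" using vertex_sn zD z_def by simp
    have vy1: "vertex M ?y1 = vertex M h" using vertex_sn[OF hD, of "Suc k"] by simp
    obtain j where j: "j < nxt M C h" "face M ?w = face M ((s ^^ j) h)" using fl Fan_iff by auto
    have yjD: "(s ^^ j) h \<in> D" using sn_in hD by simp
    have "?w \<in> face M ((s ^^ j) h)" using j in_face by metis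
    hence cases: "?w = (s ^^ j) h \<or> ?w = p ((s ^^ j) h) \<or> ?w = p (p ((s ^^ j) h))" using face_eq yjD by simp
    moreover have "?w \<noteq> (s ^^ j) h"
    proof
      assume "?w = (s ^^ j) h"
      hence "vertex M ?w = vertex M h" using vertex_sn hD by simp
      thus False using vw vy1 noloop'[OF y1D] by simp
    qed
    moreover have "?w = p ((s ^^ j) h) \<Longrightarrow> ?w = z"
    proof -
      assume wp: "?w = p ((s ^^ j) h)"
      hence wa: "?w = a ((s ^^ Suc j) h)" using p_eq by simp
      have "(s ^^ Suc j) h = ?y1"
      proof (rule nomulti')
        show "(s ^^ Suc j) h \<in> D" "?y1 \<in> D" using sn_in hD by blast+
        show "vertex M ((s ^^ Suc j) h) = vertex M ?y1" using vertex_ssn hD by simp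
        show "vertex M (a ((s ^^ Suc j) h)) = vertex M (a ?y1)" using wa vw by simp
      qed
      thus "?w = z" using wa z_def by simp
    qed
    moreover have "?w = p (p ((s ^^ j) h)) \<Longrightarrow> ?w = (s ^^ (Q - 1)) z"
    proof -
      assume wp: "?w = p (p ((s ^^ j) h))"
      have "a (s ?w) = (s ^^ j) h" using wp ppp[OF yjD] p_eq by simp
      hence sw: "s ?w = a ((s ^^ j) h)" using aa s_in wD by metis
      have "vertex M (a ((s ^^ j) h)) = vertex M (a ?y1)" using sw vw vertex_s[OF wD] by simp
      moreover have "vertex M ((s ^^ j) h) = vertex M ?y1" using vertex_sn hD vertex_ssn by simp
      ultimately have "(s ^^ j) h = ?y1" using nomulti' yjD y1D by blast
      hence "s ?w = z" using sw z_def by simp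
      thus "?w = (s ^^ (Q - 1)) z" using s_inj[OF wD sn_in[OF zD, of "Q - 1"]] sQ1 by simp
    qed
    ultimately show "?w = z \<or> ?w = (s ^^ (Q - 1)) z" by blast
  qed
  have nofan: "\<And>l. 1 \<le> l \<Longrightarrow> l \<le> Q - 2 \<Longrightarrow> face M ((s ^^ l) z) \<notin> Fan h"
  proof
    fix l assume l: "1 \<le> l" "l \<le> Q - 2" "face M ((s ^^ l) z) \<in> Fan h"
    have lQ: "l < Q" using l Q2 by simp
    have "(s ^^ l) z \<noteq> (s ^^ 0) z" using S.per_distinct[of z l 0] lQ l zD Q_def by auto
    moreover have "(s ^^ l) z \<noteq> (s ^^ (Q - 1)) z" using S.per_distinct[of z l "Q - 1"] lQ l zD Q_def Q2 by auto
    ultimately show False using atu[of l] l by auto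
  qed
  show ?thesis
  proof (cases "Q = 2")
    case True
    hence "Gf h k \<in> Fan h" "Gf h (Suc k) \<in> Fan h" using Gk Gk1 fanz fanw1 by simp_all
    thus ?thesis by simp
  next
    case False
    hence Q3: "3 \<le> Q" using Q2 by simp
    have n1: "Gf h k \<notin> Fan h" using Gk nofan[of 1] Q3 by simp
    have n2: "Gf h (Suc k) \<notin> Fan h" using Gk1 nofan[of "Q - 2"] Q3 by simp
    have "(face M ((s ^^ 1) z), face M ((s ^^ (Q - 2)) z)) \<in> {(A, B). (A, B) \<in> RC M C \<and> A \<notin> Fan h \<and> B \<notin> Fan h}\<^sup>*"
    proof (rule AV[OF zD])
      show "1 \<le> Q - 2" using Q3 by simp
      fix l assume l: "1 \<le> l" "l < Q - 2"
      have "s ((s ^^ l) z) \<in> vertex M z" using sn_in_vertex[of "Suc l" z] by simp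
      thus "edge M (s ((s ^^ l) z)) \<notin> E \<and> face M ((s ^^ l) z) \<notin> Fan h \<and> face M (s ((s ^^ l) z)) \<notin> Fan h"
        using fz nofan[of l] nofan[of "Suc l"] l by simp
    qed
    thus ?thesis using Gk Gk1 n1 n2 unfolding Rr_def by simp
  qed
qed

lemma G_chain: assumes fr: "free_corner M r C h" and Gi: "Gf h i \<notin> Fan h"
  shows "i \<le> j \<Longrightarrow> j < nxt M C h \<Longrightarrow> Gf h j \<notin> Fan h \<and> (Gf h i, Gf h j) \<in> (Rr h)\<^sup>*"
proof (induction j)
  case 0 then show ?case using Gi by simp
next
  case (Suc j)
  show ?case
  proof (cases "i \<le> j")
    case True
    hence ih: "Gf h j \<notin> Fan h \<and> (Gf h i, Gf h j) \<in> (Rr h)\<^sup>*" using Suc by simp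
    have st: "(Gf h j \<in> Fan h \<longleftrightarrow> Gf h (Suc j) \<in> Fan h) \<and> (Gf h j \<notin> Fan h \<longrightarrow> (Gf h j, Gf h (Suc j)) \<in> (Rr h)\<^sup>*)"
      using G_step[OF fr] Suc by blast
    thus ?thesis using ih by (meson rtrancl_trans)
  next
    case False
    hence "i = Suc j" using Suc by simp
    thus ?thesis using Gi by simp
  qed
qed

lemma conq_Dconn: assumes fr: "free_corner M r C h"
  and DC: "\<forall>X\<in>faces M - cF C. \<forall>Y\<in>faces M - cF C. (X, Y) \<in> (RC M C)\<^sup>*"
  shows "\<forall>X\<in>faces M - cF (conquer M C h). \<forall>Y\<in>faces M - cF (conquer M C h). (X, Y) \<in> (RC M (conquer M C h))\<^sup>*"
proof (intro ballI)
  fix X Y assume X: "X \<in> faces M - cF (conquer M C h)" and Y: "Y \<in> faces M - cF (conquer M C h)"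
  have bh: "bcorner M C h" using fr unfolding free_corner_def by blast
  have hE: "edge M h \<in> E" using bh unfolding bcorner_def by blast
  have XF: "X \<notin> Fan h" "X \<in> faces M - cF C" and YF: "Y \<notin> Fan h" "Y \<in> faces M - cF C"
    using X Y conq_F by auto
  have path: "(X, Y) \<in> (RC M C)\<^sup>*" using DC XF YF by blast
  have Bc: "\<And>b1 b2. b1 \<notin> Fan h \<Longrightarrow> b2 \<notin> Fan h \<Longrightarrow> (\<exists>X\<in>Fan h. (X, b1) \<in> RC M C)
      \<Longrightarrow> (\<exists>X\<in>Fan h. (X, b2) \<in> RC M C) \<Longrightarrow> (b1, b2) \<in> (Rr h)\<^sup>*"
  proof -
    fix b1 b2 assume b: "b1 \<notin> Fan h" "b2 \<notin> Fan h" "\<exists>X\<in>Fan h. (X, b1) \<in> RC M C" "\<exists>X\<in>Fan h. (X, b2) \<in> RC M C"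
    obtain i where i: "i < nxt M C h" "b1 = Gf h i" using B_sub[OF hE] b by blast
    obtain j where j: "j < nxt M C h" "b2 = Gf h j" using B_sub[OF hE] b by blast
    show "(b1, b2) \<in> (Rr h)\<^sup>*"
    proof (cases "i \<le> j")
      case True thus ?thesis using G_chain[OF fr _ True j(1)] i j b by simp
    next
      case False
      hence "(b2, b1) \<in> (Rr h)\<^sup>*" using G_chain[OF fr, of j i] i j b by simp
      thus ?thesis using Rr_rtr_sym by blast
    qed
  qed
  have "(X, Y) \<in> (Rr h)\<^sup>*"
    using rtrancl_remove[of "RC M C" "Fan h" X Y] RC_sym Bc path XF YF unfolding Rr_def by blast
  thus "(X, Y) \<in> (RC M (conquer M C h))\<^sup>*" using RC_conq[OF hE] unfolding Rr_def by simp
qed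

end

context tri begin

definition inv :: "'d cplx \<Rightarrow> bool" where
  "inv C \<longleftrightarrow> cplx M g r C \<and> cV C = {vertex M x | x. x \<in> \<Union> (cE C)} \<and> face M r \<in> cF C
     \<and> (\<forall>X\<in>faces M - cF C. \<forall>Y\<in>faces M - cF C. (X, Y) \<in> (RC M C)\<^sup>*)
     \<and> (C \<noteq> full_cplx M \<longrightarrow> face M (a r) \<notin> cF C)"

lemma inv_init: "inv (init_cplx M r)"
  unfolding inv_def C0_def[symmetric]
  using C0_cplx C0_V C0_F C0_Dconn face_a_neq r_in by auto

lemma cplx_full: assumes cp: "cplx M g r C" and V: "cV C = {vertex M x | x. x \<in> \<Union> (cE C)}"
  and F: "cF C = faces M" shows "C = full_cplx M"
proof -
  interpret cplx M g r C using cp .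
  have E: "cE C = edges M"
  proof
    show "cE C \<subseteq> edges M" using J1 .
    show "edges M \<subseteq> cE C"
    proof
      fix e assume "e \<in> edges M"
      then obtain y where y: "y \<in> D" "e = edge M y" unfolding edges_def by auto
      have "face M y \<in> cF C" using F y unfolding faces_def by auto
      thus "e \<in> cE C" using J3 in_face y by blast
    qed
  qed
  have U: "\<Union> (edges M) = D" unfolding edges_def edge_def using a_in by auto
  have "cV C = verts M" using V E U unfolding verts_def by auto
  thus ?thesis unfolding full_cplx_def cV_def cE_def cF_def using E F
    by (metis cE_def cF_def prod.collapse)
qed

lemma ar_bcorner: assumes I: "inv C" and nf: "C \<noteq> full_cplx M" shows "bcorner M C (a r)"
proof -
  interpret cplx M g r C using I unfolding inv_def by blast
  have rF: "face M r \<in> cF C" and J6: "face M (a r) \<notin> cF C" using I nf unfolding inv_def by auto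
  have "edge M r \<in> cE C" using J3 rF in_face by blast
  hence arE: "edge M (a r) \<in> cE C" using edge_a r_in by simp
  have "walk M C (a r) \<notin> cF C" using walk_cF[OF arE] J6 by blast
  thus ?thesis unfolding bcorner_def using arE a_in r_in by blast
qed

lemma inv_double: assumes I: "inv C" and nf: "C \<noteq> full_cplx M" and ch: "chordal M C e"
  and ns: "\<not> separating M C e" and ex: "\<And>d. d \<in> e \<Longrightarrow> \<exists>h. is_ext M C d h"
  shows "inv (double_edge M C e)"
proof -
  interpret cplx M g r C using I unfolding inv_def by blast
  let ?C' = "double_edge M C e"
  have E': "cE ?C' = insert e (cE C)" and F': "cF ?C' = cF C" and V': "cV ?C' = cV C"
    unfolding double_edge_def cE_def cF_def cV_def by simp_all
  have eE: "e \<in> edges M" "e \<notin> cE C" using ch unfolding chordal_def by auto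
  have cp: "cplx M g r ?C'" using J1 J2 J3 eE E' F' by unfold_locales auto
  have V: "cV ?C' = {vertex M x | x. x \<in> \<Union> (cE ?C')}"
  proof -
    have "\<And>d. d \<in> e \<Longrightarrow> vertex M d \<in> cV C"
    proof -
      fix d assume d: "d \<in> e"
      obtain h where h: "is_ext M C d h" using ex d by blast
      have hE: "edge M h \<in> cE C" using h unfolding is_ext_def bcorner_def by blast
      have "vertex M d = vertex M h" using ext_vertex hE h unfolding is_ext_def by blast
      thus "vertex M d \<in> cV C" using I hE in_edge unfolding inv_def by blast
    qed
    thus ?thesis using I E' V' unfolding inv_def by auto
  qed
  have RC': "RC M ?C' = Re e" unfolding RC_def Re_def E' by auto
  have nsep: "\<forall>d\<in>e. (face M d, face M (a d)) \<in> (Re e)\<^sup>*" using ns ch unfolding separating_Re by blast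
  have sub: "RC M C \<subseteq> (Re e)\<^sup>*"
  proof
    fix z assume "z \<in> RC M C"
    then obtain x where x: "x \<in> D" "edge M x \<notin> cE C" "z = (face M x, face M (a x))" unfolding RC_def by blast
    show "z \<in> (Re e)\<^sup>*"
    proof (cases "edge M x = e")
      case True thus ?thesis using nsep x in_edge by metis
    next
      case False thus ?thesis using x unfolding Re_def by blast
    qed
  qed
  have DC: "\<forall>X\<in>faces M - cF ?C'. \<forall>Y\<in>faces M - cF ?C'. (X, Y) \<in> (RC M ?C')\<^sup>*"
  proof (intro ballI)
    fix X Y assume "X \<in> faces M - cF ?C'" "Y \<in> faces M - cF ?C'"
    hence "(X, Y) \<in> (RC M C)\<^sup>*" using I F' unfolding inv_def by blast
    hence "(X, Y) \<in> ((Re e)\<^sup>*)\<^sup>*" using rtrancl_mono[OF sub] by blast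
    thus "(X, Y) \<in> (RC M ?C')\<^sup>*" using RC' by simp
  qed
  have J6: "face M (a r) \<notin> cF ?C'" using I nf F' unfolding inv_def by auto
  show ?thesis unfolding inv_def using cp V DC J6 I F' unfolding inv_def by auto
qed

end

context tri begin

lemma inv_conq_basic: assumes I: "inv C" and fr: "free_corner M r C h"
  shows "cplx M g r (conquer M C h) \<and> cV (conquer M C h) = {vertex M x | x. x \<in> \<Union> (cE (conquer M C h))}
    \<and> face M r \<in> cF (conquer M C h)
    \<and> (\<forall>X\<in>faces M - cF (conquer M C h). \<forall>Y\<in>faces M - cF (conquer M C h). (X, Y) \<in> (RC M (conquer M C h))\<^sup>*)"
proof -
  interpret cplx M g r C using I unfolding inv_def by blast
  have bh: "bcorner M C h" using fr unfolding free_corner_def by blast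
  have hE: "edge M h \<in> cE C" using bh unfolding bcorner_def by blast
  have hD: "h \<in> D" using cdart hE .
  let ?C' = "conquer M C h"
  have FanF: "Fan h \<subseteq> faces M" unfolding Fan_def ext_faces_def faces_def using sn_in hD by auto
  have EnE: "En h \<subseteq> edges M"
  proof
    fix e assume "e \<in> En h"
    then obtain d f where df: "e = edge M d" "f \<in> Fan h" "d \<in> f" unfolding En_def by auto
    obtain k where "f = face M ((s ^^ k) h)" using df Fan_iff by auto
    hence "d \<in> D" using df face_sub sn_in hD by blast
    thus "e \<in> edges M" using df unfolding edges_def by blast
  qed
  have cp: "cplx M g r ?C'"
  proof
    show "cE ?C' \<subseteq> edges M" using J1 EnE conq_E by auto
    show "cF ?C' \<subseteq> faces M" using J2 FanF conq_F by auto
    fix f x assume "f \<in> cF ?C'" "x \<in> f"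
    thus "edge M x \<in> cE ?C'" using J3 conq_F conq_E unfolding En_def by auto
  qed
  have V: "cV ?C' = {vertex M x | x. x \<in> \<Union> (cE ?C')}"
    using I conq_V conq_E unfolding inv_def by auto
  have rF: "face M r \<in> cF ?C'" using I conq_F unfolding inv_def by auto
  have DC: "\<forall>X\<in>faces M - cF C. \<forall>Y\<in>faces M - cF C. (X, Y) \<in> (RC M C)\<^sup>*" using I unfolding inv_def by blast
  show ?thesis using cp V rF conq_Dconn[OF fr DC] by blast
qed

lemma chordal_I: assumes cp: "cplx M g r C" and d: "d \<in> D" and dE: "edge M d \<notin> cE C"
  and h1: "is_ext M C d h1" and h2: "is_ext M C (a d) h2" shows "chordal M C (edge M d)"
  unfolding chordal_def edges_def edge_def using d dE h1 h2 by (auto simp: edge_def)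

lemma inv_conq_J6: assumes I: "inv C" and nf: "C \<noteq> full_cplx M" and fr: "free_corner M r C h"
  and nf': "conquer M C h \<noteq> full_cplx M"
  shows "face M (a r) \<notin> cF (conquer M C h)"
proof
  interpret cplx M g r C using I unfolding inv_def by blast
  assume inF: "face M (a r) \<in> cF (conquer M C h)"
  have cp: "cplx M g r C" using I unfolding inv_def by blast
  have bh: "bcorner M C h" using fr unfolding free_corner_def by blast
  have hE: "edge M h \<in> cE C" using bh unfolding bcorner_def by blast
  have hD: "h \<in> D" using cdart hE .
  have J6: "face M (a r) \<notin> cF C" using I nf unfolding inv_def by blast
  have bar: "bcorner M C (a r)" using ar_bcorner I nf .
  have arE: "edge M (a r) \<in> cE C" using bar unfolding bcorner_def by blast
  have arD: "a r \<in> D" using a_in r_in .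
  have "face M (a r) \<in> Fan h" using inF J6 conq_F by auto
  then obtain k where k: "k < nxt M C h" "face M (a r) = face M ((s ^^ k) h)" using Fan_iff by auto
  let ?y = "(s ^^ k) h"
  have yD: "?y \<in> D" using sn_in hD .
  have "?y \<in> face M (a r)" using k in_face by metis
  hence cs: "?y = a r \<or> ?y = p (a r) \<or> ?y = p (p (a r))" using face_eq arD by simp
  have redge: "edge M (a r) = edge M r" using edge_a r_in by simp
  have hr1: "h \<notin> edge M r" and hr2: "sigC M C h \<notin> edge M r" using fr unfolding free_corner_def by auto
  have ext_chordal: "\<And>d. d \<in> ext_brins M C h \<Longrightarrow> \<not> chordal M C (edge M d)"
    using fr unfolding free_corner_def by blast
  show False
  proof -
    { assume y: "?y = a r"
      have False
      proof (cases k)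
        case 0 thus False using y hr1 unfolding edge_def by simp
      next
        case (Suc k') thus False using nxt_min[of k h] k y arE by simp
      qed }
    moreover
    { assume y: "?y = p (p (a r))"
      have "a (s ?y) = a r" using y ppp[OF arD] p_eq by simp
      hence "s ?y = r" using a_inj[OF s_in[OF yD] r_in] by blast
      hence sy: "(s ^^ Suc k) h = r" by simp
      have rE: "edge M r \<in> cE C" using arE redge by simp
      have "\<not> Suc k < nxt M C h" using nxt_min[of "Suc k" h] sy rE by auto
      hence "Suc k = nxt M C h" using k by simp
      hence "sigC M C h = r" unfolding sigC_def using sy by simp
      hence False using hr2 in_edge by metis }
    moreover
    { assume y: "?y = p (a r)"
      have yb: "?y = a (s (a r))" using y p_eq by simp
      have sarD: "s (a r) \<in> D" using s_in arD .
      have ey: "edge M ?y = edge M (s (a r))" using yb edge_a sarD by simp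
      have False
      proof (cases k)
        case (Suc k')
        hence yext: "?y \<in> ext_brins M C h" unfolding ext_brins_def using k by blast
        hence yE: "edge M ?y \<notin> cE C" using ext_not_C by blast
        have n1: "1 < nxt M C (a r)"
        proof (rule ccontr)
          assume "\<not> ?thesis"
          hence "nxt M C (a r) = 1" using nxt_pos[OF arE] by simp
          hence "edge M (s (a r)) \<in> cE C" using nxt_C[OF arE] by simp
          thus False using yE ey by simp
        qed
        hence "s (a r) \<in> ext_brins M C (a r)" unfolding ext_brins_def by (auto intro!: exI[of _ 1])
        hence "is_ext M C (a ?y) (a r)" using yb aa sarD bar unfolding is_ext_def by simp
        moreover have "is_ext M C ?y h" using yext bh unfolding is_ext_def by simp
        ultimately have "chordal M C (edge M ?y)" using chordal_I[OF cp yD yE] by blast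
        thus False using ext_chordal yext by blast
      next
        case 0
        hence hb: "h = p (a r)" using y by simp
        let ?c = "p (p (a r))"
        have cD: "?c \<in> D" using p_in arD by blast
        have shc: "s h = a ?c"
        proof -
          have "p h = ?c" using hb by simp
          hence "a (a (s h)) = a ?c" using p_eq by simp
          thus ?thesis using aa[OF s_in[OF hD]] by simp
        qed
        show False
        proof (cases "nxt M C h = 1")
          case False
          hence n2: "1 < nxt M C h" using nxt_pos[OF hE] by simp
          hence shext: "s h \<in> ext_brins M C h" unfolding ext_brins_def by (auto intro!: exI[of _ 1])
          hence shE: "edge M (s h) \<notin> cE C" using ext_not_C by blast
          interpret O: orbC M g r C "a r" using arE by unfold_locales
          have tc: "t ?c = a r"
          proof -
            have "a (s ?c) = a r" using ppp[OF arD] p_eq by simp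
            hence "s ?c = r" using a_inj[OF s_in[OF cD] r_in] by blast
            hence "edge M (s ?c) \<in> cE C" using arE redge by simp
            thus ?thesis using t_p ppp[OF arD] by simp
          qed
          have "O.xs (Suc (O.N - 1)) = a r" using O.xs_N O.N_pos by simp
          hence "t (O.xs (O.N - 1)) = t ?c" using tc by simp
          hence cpos: "?c = O.xs (O.N - 1)" using t_inj[OF cD O.xs_in] by simp
          have cE': "edge M ?c \<notin> cE C" using shE shc edge_a cD by simp
          obtain c0 where c0: "c0 \<le> O.N - 1" "edge M (O.xs c0) \<in> cE C" "O.N - 1 - c0 < nxt M C (O.xs c0)"
            "O.xs (O.N - 1) = (s ^^ (O.N - 1 - c0)) (O.xs c0)" "O.xs c0 \<in> walk M C (a r)"
            using O.rep by blast
          have nz: "O.N - 1 - c0 \<noteq> 0" using c0 cE' cpos by auto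
          hence cext: "?c \<in> ext_brins M C (O.xs c0)" unfolding ext_brins_def using c0 cpos by auto
          have "bcorner M C (O.xs c0)" using O.walk_bcorner bar c0 by blast
          hence "is_ext M C (a (s h)) (O.xs c0)" using cext shc aa cD unfolding is_ext_def by simp
          moreover have "is_ext M C (s h) h" using shext bh unfolding is_ext_def by simp
          ultimately have "chordal M C (edge M (s h))" using chordal_I[OF cp s_in[OF hD] shE] by blast
          thus False using ext_chordal shext by blast
        next
          case True
          have Fh: "Fan h = {face M (a r)}" unfolding Fan_def ext_faces_def using True k 0 by simp
          have shE: "edge M (s h) \<in> cE C" using nxt_C[OF hE] True by simp
          have edgesF: "\<And>x. x \<in> face M (a r) \<Longrightarrow> edge M x \<in> cE C"
          proof -
            fix x assume "x \<in> face M (a r)"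
            hence "x = a r \<or> x = h \<or> x = ?c" using face_eq arD hb by simp
            moreover have "edge M ?c = edge M (s h)" using shc edge_a cD by simp
            ultimately show "edge M x \<in> cE C" using arE hE shE by auto
          qed
          have iso: "\<And>X. (face M (a r), X) \<in> (RC M C)\<^sup>* \<Longrightarrow> X = face M (a r)"
          proof -
            fix X assume "(face M (a r), X) \<in> (RC M C)\<^sup>*"
            thus "X = face M (a r)"
            proof (induction rule: rtrancl_induct)
              case base then show ?case by simp
            next
              case (step Y Z)
              then obtain x where x: "x \<in> D" "edge M x \<notin> cE C" "Y = face M x" unfolding RC_def by blast
              have "x \<in> face M (a r)" using x step in_face by metis
              thus ?case using edgesF x by blast
            qed
          qed
          have "cF (conquer M C h) = faces M"
          proof
            have "cplx M g r (conquer M C h)" using inv_conq_basic[OF I fr] by blast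
            thus "cF (conquer M C h) \<subseteq> faces M" by (rule cplx.J2)
            show "faces M \<subseteq> cF (conquer M C h)"
            proof
              fix X assume X: "X \<in> faces M"
              show "X \<in> cF (conquer M C h)"
              proof (cases "X \<in> cF C")
                case True thus ?thesis using conq_F by simp
              next
                case False
                have fa: "face M (a r) \<in> faces M - cF C" using J6 arD unfolding faces_def by blast
                have "(face M (a r), X) \<in> (RC M C)\<^sup>*" using I fa X False unfolding inv_def by blast
                hence "X = face M (a r)" using iso by blast
                thus ?thesis using conq_F Fh by simp
              qed
            qed
          qed
          moreover have "cplx M g r (conquer M C h)" "cV (conquer M C h) = {vertex M x | x. x \<in> \<Union> (cE (conquer M C h))}"
            using inv_conq_basic[OF I fr] by blast+
          ultimately have "conquer M C h = full_cplx M" using cplx_full by blast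
          thus False using nf' by simp
        qed
      qed }
    ultimately show False using cs by blast
  qed
qed

lemma inv_step: assumes I: "inv C" and st: "alg_step M r C C'" shows "inv C'"
proof -
  interpret cplx M g r C using I unfolding inv_def by blast
  have nf: "C \<noteq> full_cplx M" using st unfolding alg_step_def by blast
  consider (c) h where "free_corner M r C h" "C' = conquer M C h"
    | (sp) e where "split_edge M C e" "C' = double_edge M C e"
    | (me) e where "merge_edge M C e" "C' = double_edge M C e"
    using st unfolding alg_step_def by blast
  thus ?thesis
  proof cases
    case c
    thus ?thesis using inv_conq_basic[OF I c(1)] inv_conq_J6[OF I nf c(1)] unfolding inv_def by blast
  next
    case sp
    have "chordal M C e" "\<not> separating M C e" using sp unfolding split_edge_def by auto
    moreover have "\<And>d. d \<in> e \<Longrightarrow> \<exists>h. is_ext M C d h" using sp unfolding split_edge_def chordal_def by blast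
    ultimately show ?thesis using inv_double[OF I nf] sp by simp
  next
    case me
    have "chordal M C e" using me unfolding merge_edge_def by auto
    moreover have "\<not> separating M C e" using merge_not_sep me by blast
    moreover have "\<And>d. d \<in> e \<Longrightarrow> \<exists>h. is_ext M C d h" using me unfolding merge_edge_def chordal_def by blast
    ultimately show ?thesis using inv_double[OF I nf] me by simp
  qed
qed

end

context tri begin

lemma inv_reach: "(alg_step M r)\<^sup>*\<^sup>* (init_cplx M r) C \<Longrightarrow> inv C"
proof (induction rule: rtranclp_induct)
  case base then show ?case using inv_init .
next
  case (step y z) thus ?case using inv_step by blast
qed

definition "msr C = card (cE C) + card (cF C)"

lemma fin_edges: "finite (edges M)" unfolding edges_def using fin by simp
lemma fin_faces: "finite (faces M)" unfolding faces_def using fin by simp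

lemma msr_bound: assumes I: "inv C" shows "msr C \<le> card (edges M) + card (faces M)"
proof -
  interpret cplx M g r C using I unfolding inv_def by blast
  have "card (cE C) \<le> card (edges M)" using card_mono[OF fin_edges J1] .
  moreover have "card (cF C) \<le> card (faces M)" using card_mono[OF fin_faces J2] .
  ultimately show ?thesis unfolding msr_def by simp
qed

lemma msr_step: assumes I: "inv C" and st: "alg_step M r C C'" shows "msr C < msr C'"
proof -
  interpret cplx M g r C using I unfolding inv_def by blast
  have I': "inv C'" using inv_step I st .
  have fE': "finite (cE C')" and fF': "finite (cF C')"
    using I' cplx.J1 cplx.J2 fin_edges fin_faces finite_subset unfolding inv_def by metis+
  consider (c) h where "free_corner M r C h" "C' = conquer M C h"
    | (d) e where "chordal M C e" "C' = double_edge M C e"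
    using st unfolding alg_step_def split_edge_def merge_edge_def by blast
  thus ?thesis
  proof cases
    case c
    have bh: "bcorner M C h" using c unfolding free_corner_def by blast
    have hE: "edge M h \<in> cE C" using bh unfolding bcorner_def by blast
    have hD: "h \<in> D" using cdart hE .
    have "face M h \<notin> cF C"
    proof
      assume "face M h \<in> cF C"
      hence "walk M C h \<in> cF C" using face_cF_walk hD by simp
      thus False using bh unfolding bcorner_def by blast
    qed
    moreover have "face M h \<in> Fan h" using Fan_iff nxt_pos[OF hE] by (metis funpow_0)
    ultimately have "cF C \<subset> cF C'" using c conq_F by auto
    hence "card (cF C) < card (cF C')" using psubset_card_mono fF' by blast
    moreover have "card (cE C) \<le> card (cE C')" using card_mono fE' c conq_E by (metis Un_upper1)
    ultimately show ?thesis unfolding msr_def by simp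
  next
    case d
    have "cE C \<subset> cE C'" using d unfolding chordal_def double_edge_def cE_def by auto
    hence "card (cE C) < card (cE C')" using psubset_card_mono fE' by blast
    moreover have "cF C' = cF C" using d unfolding double_edge_def cF_def by simp
    ultimately show ?thesis unfolding msr_def by simp
  qed
qed

lemma alg_termination: "\<not> (\<exists>f. f 0 = init_cplx M r \<and> (\<forall>n. alg_step M r (f n) (f (Suc n))))"
proof
  assume "\<exists>f. f 0 = init_cplx M r \<and> (\<forall>n. alg_step M r (f n) (f (Suc n)))"
  then obtain f where f0: "f 0 = init_cplx M r" and fs: "\<And>n. alg_step M r (f n) (f (Suc n))" by blast
  have I: "\<And>n. inv (f n)"
  proof -
    fix n show "inv (f n)"
      by (induction n) (use f0 inv_init inv_step fs in auto)
  qed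
  have "\<And>n. n \<le> msr (f n)"
  proof -
    fix n show "n \<le> msr (f n)"
    proof (induction n)
      case 0 then show ?case by simp
    next
      case (Suc n) thus ?case using msr_step[OF I fs[of n]] by simp
    qed
  qed
  hence "Suc (card (edges M) + card (faces M)) \<le> msr (f (Suc (card (edges M) + card (faces M))))" by blast
  thus False using msr_bound[OF I] by (meson not_less_eq_eq)
qed

end

lemma funpow_mod_fix: assumes "(f ^^ n) x = x" shows "(f ^^ m) x = (f ^^ (m mod n)) x"
proof -
  have k: "\<And>k. (f ^^ (k * n)) x = x"
  proof -
    fix k show "(f ^^ (k * n)) x = x"
    proof (induction k)
      case 0 then show ?case by simp
    next
      case (Suc k)
      have "(f ^^ (Suc k * n)) x = (f ^^ (k * n)) ((f ^^ n) x)"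
        using fp_add[of "k * n" n f x] by (simp add: add.commute)
      thus ?case using Suc assms by simp
    qed
  qed
  have "m = m mod n + (m div n) * n" using mod_div_mult_eq[of m n] by simp
  hence "(f ^^ m) x = (f ^^ (m mod n)) ((f ^^ ((m div n) * n)) x)" by (metis fp_add)
  thus ?thesis using k by simp
qed

context tri begin

lemma r_not_bcorner: assumes I: "inv C" shows "\<not> bcorner M C r"
proof -
  interpret cplx M g r C using I unfolding inv_def by blast
  have "face M r \<in> cF C" using I unfolding inv_def by blast
  hence "walk M C r = face M r" using face_cF_walk r_in by simp
  thus ?thesis using \<open>face M r \<in> cF C\<close> unfolding bcorner_def by simp
qed

end

locale mainctx = tri M g r for M :: "'d cmap" and g r +
  fixes C :: "'d cplx"
  assumes I: "inv C" and nf: "C \<noteq> full_cplx M" and nrc: "\<not> root_candidate M r C"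
begin

sublocale cplx M g r C using I unfolding inv_def by blast
sublocale O: orbC M g r C "a r"
  using ar_bcorner[OF I nf] unfolding bcorner_def by unfold_locales blast

lemma bar: "bcorner M C (a r)" using ar_bcorner[OF I nf] .
lemma arD: "a r \<in> D" using a_in r_in .
lemma ar_edge: "a r \<in> edge M r" unfolding edge_def by simp

lemma not_free: "y \<in> walk M C (a r) \<Longrightarrow> \<not> free_corner M r C y"
  using nrc bar ar_edge walk_sym O.x0E unfolding root_candidate_def by blast

lemma not_sm: "d \<in> e \<Longrightarrow> is_ext M C d h \<Longrightarrow> walk M C h = walk M C (a r) \<Longrightarrow> \<not> split_edge M C e \<and> \<not> merge_edge M C e"
  using nrc bar ar_edge unfolding root_candidate_def by blast

lemma NC: assumes y: "y \<in> walk M C (a r)" and n1: "y \<notin> edge M r" and n2: "sigC M C y \<notin> edge M r"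
  shows "\<exists>d\<in>ext_brins M C y. chordal M C (edge M d)"
  using not_free[OF y] O.walk_bcorner[OF bar y] n1 n2 unfolding free_corner_def by blast

definition "SP i j \<longleftrightarrow> i < O.N \<and> j < O.N \<and> i \<noteq> j \<and> s (O.xs j) = a (s (O.xs i))
   \<and> separating M C (edge M (s (O.xs i)))"

lemma sxD: "s (O.xs i) \<in> D" using s_in O.xs_in .

lemma SP_sym: "SP i j \<Longrightarrow> SP j i"
proof -
  assume "SP i j"
  hence h: "i < O.N" "j < O.N" "i \<noteq> j" "s (O.xs j) = a (s (O.xs i))" "separating M C (edge M (s (O.xs i)))"
    unfolding SP_def by auto
  have "s (O.xs i) = a (s (O.xs j))" using h aa sxD by simp
  moreover have "edge M (s (O.xs j)) = edge M (s (O.xs i))" using h edge_a sxD by simp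
  ultimately show "SP j i" using h unfolding SP_def by simp
qed

lemma SP_nE: "SP i j \<Longrightarrow> edge M (s (O.xs i)) \<notin> E"
  unfolding SP_def separating_def chordal_def by blast

lemma lemX: assumes c: "c < O.N" "edge M (O.xs c) \<in> E"
  and n1: "O.xs c \<notin> edge M r" and n2: "sigC M C (O.xs c) \<notin> edge M r"
  shows "\<exists>p q. c \<le> p \<and> Suc p < c + nxt M C (O.xs c) \<and> SP p q"
proof -
  let ?y = "O.xs c"
  have y: "?y \<in> walk M C (a r)" using O.pos_C_walk c by simp
  obtain d where d: "d \<in> ext_brins M C ?y" "chordal M C (edge M d)" using NC[OF y n1 n2] by blast
  obtain l where l: "0 < l" "l < nxt M C ?y" "d = (s ^^ l) ?y" using d unfolding ext_brins_def by auto
  let ?p = "c + (l - 1)"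
  have xp: "O.xs ?p = (s ^^ (l - 1)) ?y" using O.corner_steps[OF c(2), of "l - 1"] l by simp
  have sp: "s (O.xs ?p) = d" using xp l by (cases l) auto
  have pN: "?p < O.N" using O.corner_bound[OF c(2) c(1)] l by simp
  have dD: "d \<in> D" using sxD[of ?p] sp by simp
  have by': "bcorner M C ?y" using O.walk_bcorner[OF bar y] .
  have ext1: "is_ext M C d ?y" using d by' unfolding is_ext_def by simp
  obtain h2 where h2: "is_ext M C (a d) h2" using d(2) unfolding chordal_def edge_def by auto
  have ne: "d \<noteq> a d" using a_neq[OF dD] by simp
  have ad: "a d \<in> edge M d" unfolding edge_def by simp
  have wy: "walk M C ?y = walk M C (a r)" using walk_sym[OF O.x0E y] .
  have nsm: "\<not> split_edge M C (edge M d) \<and> \<not> merge_edge M C (edge M d)" using not_sm[OF in_edge ext1 wy] .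
  have "walk M C h2 = walk M C ?y"
  proof (rule ccontr)
    assume "walk M C h2 \<noteq> walk M C ?y"
    hence "\<exists>d0 h d' h'. d0 \<in> edge M d \<and> d' \<in> edge M d \<and> d0 \<noteq> d' \<and> is_ext M C d0 h \<and> is_ext M C d' h'
        \<and> walk M C h \<noteq> walk M C h'" using ext1 h2 ne in_edge[of d] ad by metis
    hence "merge_edge M C (edge M d)" unfolding merge_edge_def using d by blast
    thus False using nsm by blast
  qed
  hence w2: "walk M C h2 = walk M C (a r)" using wy by simp
  have h2E: "edge M h2 \<in> E" using h2 unfolding is_ext_def bcorner_def by blast
  have "h2 \<in> walk M C h2" by (rule in_walk)
  hence "h2 \<in> walk M C (a r)" using w2 by simp
  then obtain q where q: "q < O.N" "s (O.xs q) = a d" using O.ext_pos h2 unfolding is_ext_def by blast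
  have "\<not> split_edge M C (edge M d)" using nsm by blast
  moreover have "\<exists>d0 h d' h'. d0 \<in> edge M d \<and> d' \<in> edge M d \<and> d0 \<noteq> d' \<and> is_ext M C d0 h \<and> is_ext M C d' h'
        \<and> walk M C h = walk M C h'" using ext1 h2 ne w2 wy in_edge[of d] ad by metis
  ultimately have sep: "separating M C (edge M d)" unfolding split_edge_def using d by blast
  have "?p \<noteq> q" using sp q ne by auto
  hence "SP ?p q" unfolding SP_def using pN q sp sep by simp
  moreover have "Suc ?p < c + nxt M C ?y" using l by simp
  ultimately show ?thesis by (intro exI[of _ ?p] exI[of _ q]) simp
qed

lemma cross_char: assumes sp: "SP i j" and k: "k < O.N"
  shows "s (O.xs k) \<in> edge M (s (O.xs i)) \<longleftrightarrow> k = i \<or> k = j"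
proof -
  have h: "i < O.N" "j < O.N" "s (O.xs j) = a (s (O.xs i))" using sp unfolding SP_def by auto
  show ?thesis
  proof
    assume "s (O.xs k) \<in> edge M (s (O.xs i))"
    hence "s (O.xs k) = s (O.xs i) \<or> s (O.xs k) = s (O.xs j)" using h unfolding edge_def by auto
    hence "O.xs k = O.xs i \<or> O.xs k = O.xs j" using s_inj O.xs_in by metis
    thus "k = i \<or> k = j" using O.xs_inj k h by metis
  next
    assume "k = i \<or> k = j" thus "s (O.xs k) \<in> edge M (s (O.xs i))" using h unfolding edge_def by auto
  qed
qed

lemma inner: assumes sij: "SP i j" and ij: "i < j" and spq: "SP u v" and ip: "i < u" and pj: "u < j"
  shows "i < v \<and> v < j"
proof -
  let ?e = "edge M (s (O.xs i))"
  have sep: "separating M C ?e" using sij unfolding SP_def by blast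
  obtain d0 where d0: "d0 \<in> ?e" "(face M d0, face M (a d0)) \<notin> (Re ?e)\<^sup>*"
    using sep unfolding separating_Re by blast
  have ch: "chordal M C ?e" using sep unfolding separating_Re by blast
  have d0D: "d0 \<in> D" and e: "?e = edge M d0" "?e \<notin> E" using chordal_edge ch d0 by auto
  let ?b = "\<lambda>k. (face M d0, face M (O.xs k)) \<in> (Re ?e)\<^sup>*"
  have fl: "\<And>k. (?b (Suc k) \<noteq> ?b k) = (s (O.xs k) \<in> ?e)"
    using flip[OF e d0D d0(2) O.xs_in] by simp
  have jN: "j < O.N" using sij unfolding SP_def by simp
  have side: "\<And>k. k \<le> O.N \<Longrightarrow> (?b k = ?b 0) = (k \<le> i \<or> j < k)"
  proof -
    fix k show "k \<le> O.N \<Longrightarrow> (?b k = ?b 0) = (k \<le> i \<or> j < k)"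
    proof (induction k)
      case 0 then show ?case by simp
    next
      case (Suc k)
      hence kN: "k < O.N" by simp
      have c: "(s (O.xs k) \<in> ?e) = (k = i \<or> k = j)" using cross_char[OF sij kN] .
      have ih: "(?b k = ?b 0) = (k \<le> i \<or> j < k)" using Suc by simp
      show ?case
      proof (cases "k = i \<or> k = j")
        case True
        hence "?b (Suc k) \<noteq> ?b k" using fl[of k] c by blast
        thus ?thesis using ih True ij by auto
      next
        case False
        hence "?b (Suc k) = ?b k" using fl[of k] c by blast
        thus ?thesis using ih False by auto
      qed
    qed
  qed
  have pN: "u < O.N" "v < O.N" and sq: "s (O.xs v) = a (s (O.xs u))" using spq unfolding SP_def by auto
  have pnot: "s (O.xs u) \<notin> ?e" using cross_char[OF sij pN(1)] ip pj by simp
  have qnot: "v \<noteq> i \<and> v \<noteq> j"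
  proof
    show "v \<noteq> i"
    proof
      assume "v = i"
      hence "s (O.xs v) \<in> ?e" using cross_char[OF sij pN(2)] by simp
      hence "a (s (O.xs u)) \<in> ?e" using sq by simp
      hence "s (O.xs u) \<in> ?e" using aa sxD unfolding edge_def by (metis insert_iff singletonD)
      thus False using pnot by simp
    qed
    show "v \<noteq> j"
    proof
      assume "v = j"
      hence "s (O.xs v) \<in> ?e" using cross_char[OF sij pN(2)] by simp
      hence "a (s (O.xs u)) \<in> ?e" using sq by simp
      hence "s (O.xs u) \<in> ?e" using aa sxD unfolding edge_def by (metis insert_iff singletonD)
      thus False using pnot by simp
    qed
  qed
  have qE: "edge M (s (O.xs v)) \<notin> E" using SP_nE[OF SP_sym[OF spq]] .
  have xq: "O.xs (Suc v) = s (O.xs v)" using t_s qE by simp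
  have ff: "face M (O.xs u) = face M (O.xs (Suc v))"
    using xq sq face_as O.xs_in by simp
  have bp: "?b u \<noteq> ?b 0" using side[of u] pN ip pj by simp
  have "\<not> (v < i)"
  proof
    assume "v < i"
    hence "?b (Suc v) = ?b 0" using side[of "Suc v"] pN by simp
    thus False using bp ff by simp
  qed
  moreover have "\<not> (j < v)"
  proof
    assume "j < v"
    hence "?b (Suc v) = ?b 0" using side[of "Suc v"] pN by simp
    thus False using bp ff by simp
  qed
  ultimately show ?thesis using qnot by auto
qed

end

context mainctx begin

lemma r_nb: "\<not> bcorner M C r" using r_not_bcorner[OF I] .

lemma cs_bcorner: "edge M (O.xs k) \<in> E \<Longrightarrow> bcorner M C (O.xs k)"
  using O.pos_C_walk O.walk_bcorner bar by blast

lemma first_pair: "\<exists>u v. SP u v"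
proof -
  let ?ar = "a r"
  have arE: "edge M ?ar \<in> E" using O.x0E .
  let ?n0 = "nxt M C ?ar"
  have x0: "O.xs 0 = ?ar" by simp
  have xc1: "O.xs ?n0 = W ?ar" using O.corner_next[of 0] arE by simp
  have y1E: "edge M (O.xs ?n0) \<in> E" using xc1 W_C arE by simp
  have c1N: "?n0 \<le> O.N" using O.corner_bound[of 0] arE O.N_pos by simp
  have c1pos: "0 < ?n0" using nxt_pos arE by simp
  have sigD: "sigC M C ?ar \<in> D" using sigC_in arE .
  have c1lt: "?n0 < O.N"
  proof (rule ccontr)
    assume "\<not> ?thesis"
    hence "?n0 = O.N" using c1N by simp
    hence "W ?ar = ?ar" using xc1 O.xs_N by simp
    hence "a (sigC M C ?ar) = a r" by simp
    hence "sigC M C ?ar = r" using a_inj[OF sigD r_in] by simp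
    hence "vertex M r = vertex M ?ar" using vertex_sigC arE by metis
    thus False using noloop'[OF r_in] by simp
  qed
  let ?y = "O.xs ?n0"
  have yD: "?y \<in> D" using O.xs_in .
  have ny1: "?y \<noteq> ?ar" using O.xs_inj[of ?n0 0] c1lt c1pos O.N_pos by auto
  have ny2: "?y \<noteq> r" using cs_bcorner[OF y1E] r_nb by auto
  have ny3: "sigC M C ?y \<noteq> r"
  proof
    assume sr: "sigC M C ?y = r"
    let ?d = "sigC M C ?ar"
    have "vertex M ?y = vertex M r" using vertex_sigC[OF y1E] sr by simp
    hence v2: "vertex M (a ?d) = vertex M (a ?ar)" using xc1 aa r_in by simp
    have v1: "vertex M ?d = vertex M ?ar" using vertex_sigC arE by simp
    have "?d = ?ar" using nomulti'[OF sigD arD v1 v2] .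
    hence fix0: "(s ^^ ?n0) ?ar = ?ar" unfolding sigC_def by simp
    let ?q = "p (p r)"
    have rF: "face M r \<in> cF C" using I unfolding inv_def by blast
    have qE: "edge M ?q \<in> E" using J3[OF rF] face_eq r_in by simp
    have qv: "?q \<in> vertex M ?ar"
    proof -
      have "vertex M ?q = vertex M ?ar" using vertex_pp r_in by simp
      thus ?thesis using in_vertex by metis
    qed
    have qne: "?q \<noteq> ?ar"
    proof
      assume "?q = ?ar"
      hence "a r \<in> face M r" using face_eq r_in by simp
      thus False using a_notin_face r_in by simp
    qed
    obtain m where m: "?q = (s ^^ m) ?ar" using qv unfolding vertex_def orb_def by auto
    hence qm: "?q = (s ^^ (m mod ?n0)) ?ar" using funpow_mod_fix[OF fix0] by simp
    have "m mod ?n0 \<noteq> 0"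
    proof
      assume "m mod ?n0 = 0"
      hence "?q = ?ar" using qm by simp
      thus False using qne by simp
    qed
    moreover have "m mod ?n0 < ?n0" using c1pos by simp
    ultimately have "edge M ?q \<notin> E" using nxt_min[of "m mod ?n0" ?ar] qm by simp
    thus False using qE by simp
  qed
  have ny4: "sigC M C ?y \<noteq> ?ar"
  proof
    assume sr: "sigC M C ?y = ?ar"
    have "O.xs (?n0 + nxt M C ?y) = W ?y" using O.corner_next[OF y1E] .
    hence xr: "O.xs (?n0 + nxt M C ?y) = r" using sr aa r_in by simp
    have "edge M r \<in> E" using arE edge_a r_in by simp
    hence "bcorner M C r" using cs_bcorner xr by metis
    thus False using r_nb by simp
  qed
  have "?y \<notin> edge M r" using ny1 ny2 unfolding edge_def by auto
  moreover have "sigC M C ?y \<notin> edge M r" using ny3 ny4 unfolding edge_def by auto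
  ultimately show ?thesis using lemX[OF c1lt y1E] by blast
qed

lemma main_false: False
proof -
  define G where "G = {g. \<exists>i j. i < j \<and> j - i = g \<and> SP i j}"
  obtain u v where uv: "SP u v" using first_pair by blast
  have uvne: "u \<noteq> v" using uv unfolding SP_def by simp
  have Gmem: "\<And>i' j'. i' < j' \<Longrightarrow> SP i' j' \<Longrightarrow> j' - i' \<in> G"
  proof -
    fix i' j' assume h: "i' < j'" "SP i' j'"
    show "j' - i' \<in> G" unfolding G_def mem_Collect_eq
      by (rule exI[of _ i'], rule exI[of _ j']) (simp add: h)
  qed
  have "\<exists>g. g \<in> G"
  proof (cases "u < v")
    case True thus ?thesis using Gmem uv by blast
  next
    case False hence "v < u" using uvne by simp
    thus ?thesis using Gmem SP_sym[OF uv] by blast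
  qed
  hence g0a: "(LEAST g. g \<in> G) \<in> G" by (rule LeastI_ex)
  have g0b: "\<And>g. g \<in> G \<Longrightarrow> (LEAST g. g \<in> G) \<le> g" by (rule Least_le)
  obtain g0 where g0: "g0 \<in> G" "\<And>g. g \<in> G \<Longrightarrow> g0 \<le> g" using g0a g0b by blast
  obtain i j where ij: "i < j" "j - i = g0" "SP i j" using g0(1) unfolding G_def by blast
  have minimal: "\<And>i' j'. i' < j' \<Longrightarrow> SP i' j' \<Longrightarrow> j - i \<le> j' - i'"
  proof -
    fix i' j' assume "i' < j'" "SP i' j'"
    hence "j' - i' \<in> G" using Gmem by blast
    thus "j - i \<le> j' - i'" using g0(2) ij(2) by simp
  qed
  have iN: "i < O.N" and jN: "j < O.N" and sj: "s (O.xs j) = a (s (O.xs i))"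
    using ij unfolding SP_def by auto
  have siE: "edge M (s (O.xs i)) \<notin> E" using SP_nE[OF ij(3)] .
  obtain c where c: "c \<le> i" "edge M (O.xs c) \<in> E" "i - c < nxt M C (O.xs c)"
    "O.xs i = (s ^^ (i - c)) (O.xs c)" "O.xs c \<in> walk M C (a r)" using O.rep by blast
  let ?yc = "O.xs c" and ?nc = "nxt M C (O.xs c)"
  have ycD: "?yc \<in> D" using O.xs_in .
  have si: "s (O.xs i) = (s ^^ Suc (i - c)) ?yc" using c by simp
  have cN: "c < O.N" using c iN by simp
  have c'N: "c + ?nc \<le> O.N" using O.corner_bound[OF c(2) cN] .
  have vi: "vertex M (s (O.xs i)) = vertex M ?yc" using si vertex_ssn[OF ycD] by simp
  show False
  proof (cases "j < c + ?nc")
    case True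
    have "j - c < ?nc" using True c ij by simp
    hence "O.xs (c + (j - c)) = (s ^^ (j - c)) ?yc" using O.corner_steps[OF c(2)] by blast
    hence "O.xs j = (s ^^ (j - c)) ?yc" using c ij by simp
    hence "vertex M (s (O.xs j)) = vertex M ?yc" using vertex_sn[OF ycD, of "Suc (j - c)"] by simp
    hence "vertex M (a (s (O.xs i))) = vertex M (s (O.xs i))" using sj vi by simp
    thus False using noloop'[OF sxD] by simp
  next
    case False
    let ?c' = "c + ?nc"
    have c'lt: "?c' < O.N" using False jN by simp
    have ic': "i < ?c'" using c by simp
    have xc': "O.xs ?c' = W ?yc" using O.corner_next[OF c(2)] .
    have y'E: "edge M (O.xs ?c') \<in> E" using xc' W_C c(2) by simp
    let ?y' = "O.xs ?c'" and ?n' = "nxt M C (O.xs ?c')"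
    have y'D: "?y' \<in> D" using O.xs_in .
    show False
    proof (cases "j < ?c' + ?n'")
      case True
      have "j - ?c' < ?n'" using True False by simp
      hence "O.xs (?c' + (j - ?c')) = (s ^^ (j - ?c')) ?y'" using O.corner_steps[OF y'E] by blast
      hence "O.xs j = (s ^^ (j - ?c')) ?y'" using False by simp
      hence vj: "vertex M (s (O.xs j)) = vertex M ?y'" using vertex_sn[OF y'D, of "Suc (j - ?c')"] by simp
      let ?d' = "sigC M C ?yc"
      have d'D: "?d' \<in> D" using sigC_in c(2) .
      have v1: "vertex M (s (O.xs i)) = vertex M ?d'" using vi vertex_sigC c(2) by simp
      have v2: "vertex M (a (s (O.xs i))) = vertex M (a ?d')" using vj sj xc' by simp
      have "s (O.xs i) = ?d'" using nomulti'[OF sxD d'D v1 v2] .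
      hence "edge M (s (O.xs i)) \<in> E" using sigC_C c(2) by simp
      thus False using siE by simp
    next
      case False2: False
      let ?c'' = "?c' + ?n'"
      have c''N: "?c'' < O.N" using False2 jN by simp
      have c'pos: "0 < ?c'" using ic' by linarith
      have ny1: "?y' \<noteq> a r" using O.xs_inj[of ?c' 0] c'lt c'pos O.N_pos by auto
      have ny2: "?y' \<noteq> r" using cs_bcorner[OF y'E] r_nb by auto
      have xc'': "O.xs ?c'' = W ?y'" using O.corner_next[OF y'E] .
      have ny3: "sigC M C ?y' \<noteq> r"
      proof
        assume "sigC M C ?y' = r"
        hence "O.xs ?c'' = O.xs 0" using xc'' by simp
        hence "?c'' = 0" using O.xs_inj[OF c''N O.N_pos] by blast
        thus False using c'pos by linarith
      qed
      have ny4: "sigC M C ?y' \<noteq> a r"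
      proof
        assume "sigC M C ?y' = a r"
        hence xr: "O.xs ?c'' = r" using xc'' aa r_in by simp
        have "edge M (O.xs ?c'') \<in> E" using W_C y'E xc'' by simp
        hence "bcorner M C r" using cs_bcorner xr by metis
        thus False using r_nb by simp
      qed
      have n1: "?y' \<notin> edge M r" using ny1 ny2 unfolding edge_def by auto
      have n2: "sigC M C ?y' \<notin> edge M r" using ny3 ny4 unfolding edge_def by auto
      obtain u v where uv: "?c' \<le> u" "Suc u < ?c''" "SP u v" using lemX[OF c'lt y'E n1 n2] by blast
      have iu: "i < u" using uv ic' by simp
      have uj: "u < j" using uv False2 by simp
      have iv: "i < v \<and> v < j" using inner[OF ij(3) ij(1) uv(3) iu uj] .
      have uvne: "u \<noteq> v" using uv unfolding SP_def by simp
      show False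
      proof (cases "u < v")
        case True
        have "j - i \<le> v - u" using minimal[OF True uv(3)] .
        thus False using iu iv uj True by simp
      next
        case False
        hence vu: "v < u" using uvne by simp
        have "j - i \<le> u - v" using minimal[OF vu SP_sym[OF uv(3)]] .
        thus False using iu iv uj vu by simp
      qed
    qed
  qed
qed

end

context tri begin

lemma main_candidate: assumes I: "inv C" and nf: "C \<noteq> full_cplx M" shows "root_candidate M r C"
proof (rule ccontr)
  assume "\<not> root_candidate M r C"
  then interpret mainctx M g r C using I nf by unfold_locales
  show False using main_false .
qed

end

theorem lemma3_aux:
  fixes M :: "'d cmap" and g :: nat and r :: 'd
  assumes "triangulation M g" and "r \<in> darts M"
  shows "(\<forall>C. (alg_step M r)\<^sup>*\<^sup>* (init_cplx M r) C \<and> C \<noteq> full_cplx M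
              \<longrightarrow> root_candidate M r C)
         \<and> \<not> (\<exists>f. f 0 = init_cplx M r \<and> (\<forall>n. alg_step M r (f n) (f (Suc n))))"
proof -
  interpret tri M g r using assms by unfold_locales
  show ?thesis using main_candidate inv_reach alg_termination by blast
qed


theorem lemma3:
  fixes M :: "'d cmap" and g :: nat and r :: 'd
  assumes "triangulation M g" and "r \<in> darts M"
  shows "(\<forall>C. (alg_step M r)\<^sup>*\<^sup>* (init_cplx M r) C \<and> C \<noteq> full_cplx M
              \<longrightarrow> root_candidate M r C)
         \<and> \<not> (\<exists>f. f 0 = init_cplx M r \<and> (\<forall>n. alg_step M r (f n) (f (Suc n))))"
  using lemma3_aux[OF assms] .

end
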